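(* Fix integers $t\ge1$, $m\ge1$ and $d_1,\dots,d_{t-1}\ge1$. Let $T$ be the rooted tree in which the root (level $t$) has $2m$ children and every vertex at level $s\in\{1,\dots,t-1\}$ has exactly $d_s$ children (level-0 vertices are leaves). Then the number of isomorphism classes of admissible labelings of $T$ (with the root label fixed) having excess $\Delta=0$ equals \[ (2m-1)!!\cdot(2d_{t-1}-1)!!^{\,m}\cdot(2d_{t-2}-1)!!^{\,m d_{t-1}}\cdots(2d_1-1)!!^{\,m d_{t-1}\cdots d_2}. \]
   Context: A labeling gives each vertex $v$ a label $\ell(v)\in[N]$ with the root label fixed; it is admissible if (i) whenever $u$ is the parent of $v$ and $v$ the parent of $w$, $\ell(u)\ne\ell(w)$; (ii) for every edge $\{u,v\}$ there is another edge $\{u',v'\}$ with $\{\ell(u'),\ell(v')\}=\{\ell(u),\ell(v)\}$. Two labelings are isomorphic if one is obtained from the other by a permutation of $[N]$ (fixing the root label); an isomorphism class is thus identified with the partition of the vertex set into classes of equally labeled vertices ($N$ is assumed at least the number of vertices). The excess is $\Delta=\tfrac12|E|-|V|+1$, where $|E|$ is the number of edges and $|V|$ the number of distinct labels used (including the root's). *)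

theory Defs
  imports Complex_Main "HOL-Library.FuncSet"
begin

fun dfact :: "nat \<Rightarrow> nat" where
  "dfact 0 = 1"
| "dfact (Suc 0) = 1"
| "dfact (Suc (Suc n)) = Suc (Suc n) * dfact n"

text \<open>The tree T: vertices are the paths from the root (lists of child indices).
  A vertex of depth k lies at level t - k; the root (depth 0, level t) has 2m
  children, a vertex at depth k with 1 \<le> k < t (level t-k) has d (t-k) children,
  vertices of depth t (level 0) are leaves.\<close>
definition branch :: "nat \<Rightarrow> nat \<Rightarrow> (nat \<Rightarrow> nat) \<Rightarrow> nat \<Rightarrow> nat" where
  "branch t m d k = (if k = 0 then 2 * m else d (t - k))"

definition tree_verts :: "nat \<Rightarrow> nat \<Rightarrow> (nat \<Rightarrow> nat) \<Rightarrow> nat list set" where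
  "tree_verts t m d = {xs. length xs \<le> t \<and> (\<forall>j < length xs. xs ! j < branch t m d j)}"

definition tree_edges :: "nat \<Rightarrow> nat \<Rightarrow> (nat \<Rightarrow> nat) \<Rightarrow> nat list set set" where
  "tree_edges t m d = {{butlast xs, xs} | xs. xs \<in> tree_verts t m d \<and> xs \<noteq> []}"

definition labelings :: "nat \<Rightarrow> nat \<Rightarrow> (nat \<Rightarrow> nat) \<Rightarrow> nat \<Rightarrow> nat \<Rightarrow> (nat list \<Rightarrow> nat) set" where
  "labelings t m d N r = {l \<in> tree_verts t m d \<rightarrow>\<^sub>E {1..N}. l [] = r}"

definition admissible :: "nat \<Rightarrow> nat \<Rightarrow> (nat \<Rightarrow> nat) \<Rightarrow> (nat list \<Rightarrow> nat) \<Rightarrow> bool" where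
  "admissible t m d l \<longleftrightarrow>
     (\<forall>w \<in> tree_verts t m d. length w \<ge> 2 \<longrightarrow> l (butlast (butlast w)) \<noteq> l w) \<and>
     (\<forall>e \<in> tree_edges t m d. \<exists>e' \<in> tree_edges t m d. e' \<noteq> e \<and> l ` e' = l ` e)"

definition excess :: "nat \<Rightarrow> nat \<Rightarrow> (nat \<Rightarrow> nat) \<Rightarrow> (nat list \<Rightarrow> nat) \<Rightarrow> real" where
  "excess t m d l = real (card (tree_edges t m d)) / 2 - real (card (l ` tree_verts t m d)) + 1"

definition lab_iso :: "nat \<Rightarrow> nat \<Rightarrow> (nat \<Rightarrow> nat) \<Rightarrow> nat \<Rightarrow> nat \<Rightarrow> (nat list \<Rightarrow> nat) \<Rightarrow> (nat list \<Rightarrow> nat) \<Rightarrow> bool" where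
  "lab_iso t m d N r l l' \<longleftrightarrow>
     (\<exists>\<sigma>. bij_betw \<sigma> {1..N} {1..N} \<and> \<sigma> r = r \<and> (\<forall>v \<in> tree_verts t m d. l' v = \<sigma> (l v)))"

definition zero_excess_labelings :: "nat \<Rightarrow> nat \<Rightarrow> (nat \<Rightarrow> nat) \<Rightarrow> nat \<Rightarrow> nat \<Rightarrow> (nat list \<Rightarrow> nat) set" where
  "zero_excess_labelings t m d N r =
     {l \<in> labelings t m d N r. admissible t m d l \<and> excess t m d l = 0}"

definition num_classes :: "nat \<Rightarrow> nat \<Rightarrow> (nat \<Rightarrow> nat) \<Rightarrow> nat \<Rightarrow> nat \<Rightarrow> nat" where
  "num_classes t m d N r =
     card (zero_excess_labelings t m d N r //
           {(l, l'). l \<in> zero_excess_labelings t m d N r \<and> l' \<in> zero_excess_labelings t m d N r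
                     \<and> lab_iso t m d N r l l'})"

end

theory Submission
  imports Defs
begin

definition invs :: "'a set \<Rightarrow> ('a \<Rightarrow> 'b) \<Rightarrow> ('a \<Rightarrow> 'a) set" where
  "invs L f = {\<rho> \<in> L \<rightarrow>\<^sub>E L. \<forall>x\<in>L. \<rho> (\<rho> x) = x \<and> \<rho> x \<noteq> x \<and> f (\<rho> x) = f x}"

lemma card_fibers:
  assumes "finite A"
  shows "card A = (\<Sum>y\<in>g ` A. card {x\<in>A. g x = y})"
proof -
  have "A = (\<Union>y\<in>g ` A. {x\<in>A. g x = y})" by auto
  then have "card A = card (\<Union>y\<in>g ` A. {x\<in>A. g x = y})" by simp
  also have "\<dots> = (\<Sum>y\<in>g ` A. card {x\<in>A. g x = y})"
    by (rule card_UN_disjoint) (use assms in auto)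
  finally show ?thesis .
qed

lemma invs_empty: "invs {} f = {\<lambda>_. undefined}"
  unfolding invs_def by auto

lemma invs_split:
  assumes "a \<in> L"
  shows "invs L f = (\<Union>b\<in>{x\<in>L. f x = f a} - {a}. (\<lambda>\<sigma>. \<sigma>(a:=b, b:=a)) ` invs (L - {a,b}) f)"
proof
  show "invs L f \<subseteq> (\<Union>b\<in>{x\<in>L. f x = f a} - {a}. (\<lambda>\<sigma>. \<sigma>(a:=b, b:=a)) ` invs (L - {a,b}) f)"
  proof
    fix \<rho> assume r: "\<rho> \<in> invs L f"
    define b where "b = \<rho> a"
    have rL: "\<rho> \<in> L \<rightarrow>\<^sub>E L" and rp: "\<forall>x\<in>L. \<rho> (\<rho> x) = x \<and> \<rho> x \<noteq> x \<and> f (\<rho> x) = f x"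
      using r unfolding invs_def by auto
    have bF: "b \<in> {x\<in>L. f x = f a} - {a}" using rL rp assms unfolding b_def by auto
    define \<sigma> where "\<sigma> = restrict \<rho> (L - {a,b})"
    have "\<sigma> \<in> invs (L - {a,b}) f"
    proof -
      have "\<forall>x\<in>L - {a,b}. \<rho> x \<in> L - {a,b}"
        using rL rp assms b_def by (metis Diff_iff PiE_mem insertCI insertE singletonD)
      then show ?thesis using rp unfolding invs_def \<sigma>_def by auto
    qed
    moreover have "\<rho> = \<sigma>(a:=b, b:=a)"
    proof
      fix x show "\<rho> x = (\<sigma>(a:=b, b:=a)) x"
        using rL rp assms b_def unfolding \<sigma>_def by (cases "x \<in> L") auto
    qed
    ultimately show "\<rho> \<in> (\<Union>b\<in>{x\<in>L. f x = f a} - {a}. (\<lambda>\<sigma>. \<sigma>(a:=b, b:=a)) ` invs (L - {a,b}) f)"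
      using bF by blast
  qed
next
  show "(\<Union>b\<in>{x\<in>L. f x = f a} - {a}. (\<lambda>\<sigma>. \<sigma>(a:=b, b:=a)) ` invs (L - {a,b}) f) \<subseteq> invs L f"
  proof
    fix \<rho> assume "\<rho> \<in> (\<Union>b\<in>{x\<in>L. f x = f a} - {a}. (\<lambda>\<sigma>. \<sigma>(a:=b, b:=a)) ` invs (L - {a,b}) f)"
    then obtain b \<sigma> where b: "b \<in> L" "f b = f a" "b \<noteq> a" and s: "\<sigma> \<in> invs (L - {a, b}) f"
      and rho: "\<rho> = \<sigma>(a := b, b := a)" by blast
    have sL: "\<sigma> \<in> (L - {a,b}) \<rightarrow>\<^sub>E (L - {a,b})" and sp: "\<forall>x\<in>L - {a,b}. \<sigma> (\<sigma> x) = x \<and> \<sigma> x \<noteq> x \<and> f (\<sigma> x) = f x"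
      using s unfolding invs_def by auto
    show "\<rho> \<in> invs L f"
      unfolding invs_def rho
    proof (intro CollectI conjI ballI)
      show "\<sigma>(a := b, b := a) \<in> L \<rightarrow>\<^sub>E L" using sL b assms by (auto simp: PiE_def Pi_def extensional_def)
    next
      fix x assume x: "x \<in> L"
      show "(\<sigma>(a := b, b := a)) ((\<sigma>(a := b, b := a)) x) = x"
        using sL sp x b by (cases "x = a"; cases "x = b") (auto simp: PiE_def Pi_def)
      show "(\<sigma>(a := b, b := a)) x \<noteq> x"
        using sL sp x b by (cases "x = a"; cases "x = b") (auto simp: PiE_def Pi_def)
      show "f ((\<sigma>(a := b, b := a)) x) = f x"
        using sL sp x b by (cases "x = a"; cases "x = b") (auto simp: PiE_def Pi_def)
    qed
  qed
qed

lemma invs_finite: "finite L \<Longrightarrow> finite (invs L f)"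
  unfolding invs_def by (rule finite_subset[of _ "L \<rightarrow>\<^sub>E L"]) (auto intro: finite_PiE)

lemma dfact_step: "dfact (k + 2) = (k + 2) * dfact k"
  by (metis add_2_eq_Suc' dfact.simps(3))

lemma invs_card:
  assumes "finite L" and "\<forall>q\<in>f ` L. even (card {x\<in>L. f x = q})"
  shows "card (invs L f) = (\<Prod>q\<in>f ` L. dfact (card {x\<in>L. f x = q} - 1))"
  using assms
proof (induction "card L" arbitrary: L rule: less_induct)
  case less
  show ?case
  proof (cases "L = {}")
    case True then show ?thesis by (simp add: invs_empty)
  next
    case False
    then obtain a where a: "a \<in> L" by blast
    define q where "q = f a"
    define F where "F = {x\<in>L. f x = q}"
    have finF: "finite F" using less.prems F_def by auto
    have aF: "a \<in> F" using a F_def q_def by auto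
    have evF: "even (card F)" using less.prems a F_def q_def by auto
    have cF: "card F \<ge> 2"
    proof -
      have "card F \<ge> 1" using finF aF by (metis One_nat_def Suc_leI card_gt_0_iff empty_iff)
      with evF show ?thesis by presburger
    qed
    define P where "P = (\<Prod>q'\<in>f ` L - {q}. dfact (card {x\<in>L. f x = q'} - 1))"
    have IH: "card (invs (L - {a,b}) f) = dfact (card F - 3) * P" if b: "b \<in> F - {a}" for b
    proof -
      have bL: "b \<in> L" "f b = q" "b \<noteq> a" using b F_def by auto
      have fin': "finite (L - {a,b})" using less.prems by auto
      have "L - {a,b} \<subset> L" using a by auto
      then have lt: "card (L - {a,b}) < card L" using less.prems(1) by (rule psubset_card_mono[rotated])
      have fib: "{x\<in>L - {a,b}. f x = q'} = {x\<in>L. f x = q'}" if "q' \<noteq> q" for q'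
        using that bL q_def by auto
      have fibq: "{x\<in>L - {a,b}. f x = q} = F - {a,b}" using F_def by auto
      have cFab: "card (F - {a,b}) = card F - 2" using aF b finF by (auto simp: card_Diff_subset)
      have ev': "\<forall>q'\<in>f ` (L - {a,b}). even (card {x\<in>L - {a,b}. f x = q'})"
      proof
        fix q' assume "q' \<in> f ` (L - {a,b})"
        then show "even (card {x\<in>L - {a,b}. f x = q'})"
          using fib fibq cFab evF less.prems(2) by (cases "q' = q") auto
      qed
      have rec: "card (invs (L - {a,b}) f) = (\<Prod>q'\<in>f ` (L - {a,b}). dfact (card {x\<in>L - {a,b}. f x = q'} - 1))"
        using less.hyps[OF lt fin' ev'] .
      show ?thesis
      proof (cases "card F = 2")
        case True
        then have "F - {a,b} = {}" using cFab finF by auto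
        then have im: "f ` (L - {a,b}) = f ` L - {q}" using F_def a q_def bL by auto
        have "card (invs (L - {a,b}) f) = (\<Prod>q'\<in>f ` L - {q}. dfact (card {x\<in>L - {a,b}. f x = q'} - 1))"
          using rec im by simp
        also have "\<dots> = P" unfolding P_def
        proof (rule prod.cong[OF refl])
          fix q' assume "q' \<in> f ` L - {q}"
          then show "dfact (card {x\<in>L - {a,b}. f x = q'} - 1) = dfact (card {x\<in>L. f x = q'} - 1)"
            using fib[of q'] by simp
        qed
        finally show ?thesis using True by simp
      next
        case False
        then have "card (F - {a,b}) > 0" using cFab cF evF by presburger
        then obtain c where "c \<in> F - {a,b}" by (metis card_gt_0_iff ex_in_conv)
        then have c: "c \<in> L - {a,b}" "f c = q" using F_def by auto
        have im: "f ` (L - {a,b}) = f ` L"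
        proof
          show "f ` L \<subseteq> f ` (L - {a,b})"
          proof
            fix y assume "y \<in> f ` L"
            then obtain x where x: "x \<in> L" "y = f x" by auto
            show "y \<in> f ` (L - {a,b})"
            proof (cases "x = a \<or> x = b")
              case True
              then have "y = f c" using x c bL q_def by auto
              then show ?thesis using c by auto
            next
              case False then show ?thesis using x by auto
            qed
          qed
        qed auto
        have qin: "q \<in> f ` L" using a q_def by auto
        have "card (invs (L - {a,b}) f) = (\<Prod>q'\<in>f ` L. dfact (card {x\<in>L - {a,b}. f x = q'} - 1))"
          using rec im by simp
        also have "\<dots> = dfact (card {x\<in>L - {a,b}. f x = q} - 1) * (\<Prod>q'\<in>f ` L - {q}. dfact (card {x\<in>L - {a,b}. f x = q'} - 1))"
          using qin less.prems(1) by (intro prod.remove) auto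
        also have "\<dots> = dfact (card F - 3) * P" unfolding P_def fibq cFab
        proof (intro arg_cong2[where f="(*)"])
          have "card F - 2 - 1 = card F - 3" by linarith
          then show "dfact (card F - 2 - 1) = dfact (card F - 3)" by (rule arg_cong)
          show "(\<Prod>q'\<in>f ` L - {q}. dfact (card {x\<in>L - {a,b}. f x = q'} - 1)) = (\<Prod>q'\<in>f ` L - {q}. dfact (card {x\<in>L. f x = q'} - 1))"
          proof (rule prod.cong[OF refl])
            fix q' assume "q' \<in> f ` L - {q}"
            then show "dfact (card {x\<in>L - {a,b}. f x = q'} - 1) = dfact (card {x\<in>L. f x = q'} - 1)"
              using fib[of q'] by simp
          qed
        qed
        finally show ?thesis .
      qed
    qed
    have split: "invs L f = (\<Union>b\<in>F - {a}. (\<lambda>\<sigma>. \<sigma>(a:=b, b:=a)) ` invs (L - {a,b}) f)"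
      using invs_split[OF a, of f] unfolding F_def q_def .
    have "card (invs L f) = (\<Sum>b\<in>F - {a}. card ((\<lambda>\<sigma>. \<sigma>(a:=b, b:=a)) ` invs (L - {a,b}) f))"
      unfolding split F_def
    proof (rule card_UN_disjoint)
      show "finite ({x \<in> L. f x = q} - {a})" using less.prems by auto
      show "\<forall>i\<in>{x \<in> L. f x = q} - {a}. finite ((\<lambda>\<sigma>. \<sigma>(a := i, i := a)) ` invs (L - {a, i}) f)"
        using less.prems by (auto intro: invs_finite)
      show "\<forall>i\<in>{x \<in> L. f x = q} - {a}. \<forall>j\<in>{x \<in> L. f x = q} - {a}. i \<noteq> j \<longrightarrow>
          (\<lambda>\<sigma>. \<sigma>(a := i, i := a)) ` invs (L - {a, i}) f \<inter> (\<lambda>\<sigma>. \<sigma>(a := j, j := a)) ` invs (L - {a, j}) f = {}"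
      proof (intro ballI impI)
        fix i j assume i: "i \<in> {x \<in> L. f x = q} - {a}" and j: "j \<in> {x \<in> L. f x = q} - {a}" and ij: "i \<noteq> j"
        show "(\<lambda>\<sigma>. \<sigma>(a := i, i := a)) ` invs (L - {a, i}) f \<inter> (\<lambda>\<sigma>. \<sigma>(a := j, j := a)) ` invs (L - {a, j}) f = {}"
        proof (rule ccontr)
          assume "\<not> ?thesis"
          then obtain \<sigma> \<sigma>' where e: "\<sigma>(a := i, i := a) = \<sigma>'(a := j, j := a)" by blast
          have "(\<sigma>(a := i, i := a)) a = (\<sigma>'(a := j, j := a)) a" using e by (rule fun_cong)
          then show False using i j ij by auto
        qed
      qed
    qed
    also have "\<dots> = (\<Sum>b\<in>F - {a}. card (invs (L - {a,b}) f))"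
    proof (rule sum.cong[OF refl], rule card_image, rule inj_onI)
      fix b \<sigma> \<sigma>' assume b: "b \<in> F - {a}" and s: "\<sigma> \<in> invs (L - {a,b}) f" "\<sigma>' \<in> invs (L - {a,b}) f"
        and eq: "\<sigma>(a:=b, b:=a) = \<sigma>'(a:=b, b:=a)"
      show "\<sigma> = \<sigma>'"
      proof
        fix x
        show "\<sigma> x = \<sigma>' x"
        proof (cases "x = a \<or> x = b")
          case True
          then have "x \<notin> L - {a,b}" by auto
          then show ?thesis using s unfolding invs_def by (auto simp: PiE_def extensional_def)
        next
          case False
          then show ?thesis using fun_cong[OF eq, of x] by auto
        qed
      qed
    qed
    also have "\<dots> = (\<Sum>b\<in>F - {a}. dfact (card F - 3) * P)"
      by (rule sum.cong[OF refl]) (rule IH)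
    also have "\<dots> = card (F - {a}) * (dfact (card F - 3) * P)"
      by (simp only: sum_constant of_nat_id)
    also have "\<dots> = (card F - 1) * (dfact (card F - 3) * P)"
      using finF aF by (simp only: card_Diff_singleton)
    also have "\<dots> = dfact (card F - 1) * P"
    proof -
      have "dfact (card F - 1) = (card F - 1) * dfact (card F - 3)"
      proof (cases "card F = 2")
        case True then show ?thesis by simp
      next
        case False
        then have "card F - 1 = (card F - 3) + 2" using cF by linarith
        then show ?thesis using dfact_step by metis
      qed
      then show ?thesis by simp
    qed
    also have "\<dots> = (\<Prod>q\<in>f ` L. dfact (card {x\<in>L. f x = q} - 1))"
      unfolding P_def F_def using a q_def less.prems(1) by (intro prod.remove[symmetric]) auto
    finally show ?thesis .
  qed
qed

definition verts :: "nat \<Rightarrow> (nat \<Rightarrow> nat) \<Rightarrow> nat list set" where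
  "verts n b = {xs. length xs \<le> n \<and> (\<forall>j<length xs. xs ! j < b j)}"

definition layer :: "nat \<Rightarrow> (nat \<Rightarrow> nat) \<Rightarrow> nat list set" where
  "layer k b = {xs. length xs = k \<and> (\<forall>j<k. xs ! j < b j)}"

definition good :: "nat \<Rightarrow> (nat \<Rightarrow> nat) \<Rightarrow> (nat list \<Rightarrow> nat list) set" where
  "good n b = {\<pi> \<in> (verts n b - {[]}) \<rightarrow>\<^sub>E (verts n b - {[]}). \<forall>v\<in>verts n b - {[]}.
     \<pi> (\<pi> v) = v \<and> \<pi> v \<noteq> v \<and> length (\<pi> v) = length v \<and>
     (butlast (\<pi> v) = butlast v \<or> butlast (\<pi> v) = \<pi> (butlast v))}"

definition pf :: "(nat list \<Rightarrow> nat list) \<Rightarrow> nat list \<Rightarrow> nat list set" where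
  "pf \<pi> x = {butlast x, \<pi> (butlast x)}"

lemma verts_finite: "finite (verts n b)"
proof (rule finite_subset)
  show "verts n b \<subseteq> {xs. set xs \<subseteq> {..<(\<Sum>j<n. b j)} \<and> length xs \<le> n}"
  proof clarify
    fix xs assume xs: "xs \<in> verts n b"
    show "set xs \<subseteq> {..<(\<Sum>j<n. b j)} \<and> length xs \<le> n"
    proof
      show "set xs \<subseteq> {..<(\<Sum>j<n. b j)}"
      proof
        fix x assume "x \<in> set xs"
        then obtain j where j: "j < length xs" "x = xs ! j" by (auto simp: in_set_conv_nth)
        then have "x < b j" "j < n" using xs unfolding verts_def by auto
        moreover have "b j \<le> (\<Sum>j<n. b j)" using \<open>j < n\<close> by (intro member_le_sum) auto
        ultimately show "x \<in> {..<(\<Sum>j<n. b j)}" by auto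
      qed
      show "length xs \<le> n" using xs unfolding verts_def by auto
    qed
  qed
  show "finite {xs. set xs \<subseteq> {..<(\<Sum>j<n. b j)} \<and> length xs \<le> n}"
    by (rule finite_lists_length_le) auto
qed

lemma layer_sub: "k \<le> n \<Longrightarrow> layer k b \<subseteq> verts n b"
  unfolding layer_def verts_def by auto

lemma layer_finite: "finite (layer k b)"
  using finite_subset[OF layer_sub[of k k b] verts_finite] by simp

lemma layer_Suc: "layer (Suc k) b = (\<lambda>(xs, i). xs @ [i]) ` (layer k b \<times> {..<b k})"
proof
  show "layer (Suc k) b \<subseteq> (\<lambda>(xs, i). xs @ [i]) ` (layer k b \<times> {..<b k})"
  proof
    fix x assume x: "x \<in> layer (Suc k) b"
    then have lx: "length x = Suc k" and bx: "\<forall>j<Suc k. x ! j < b j" unfolding layer_def by auto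
    have e: "x = butlast x @ [last x]" using lx
      by (metis append_butlast_last_id list.size(3) nat.distinct(1))
    have "butlast x \<in> layer k b" using lx bx unfolding layer_def by (auto simp: nth_butlast)
    moreover have "last x < b k"
    proof -
      have "x \<noteq> []" using lx by auto
      then have "last x = x ! k" using lx by (simp add: last_conv_nth)
      then show ?thesis using bx by simp
    qed
    ultimately show "x \<in> (\<lambda>(xs, i). xs @ [i]) ` (layer k b \<times> {..<b k})"
      using e by (intro image_eqI[of _ _ "(butlast x, last x)"]) auto
  qed
next
  show "(\<lambda>(xs, i). xs @ [i]) ` (layer k b \<times> {..<b k}) \<subseteq> layer (Suc k) b"
    unfolding layer_def by (auto simp: nth_append less_Suc_eq)
qed

lemma card_layer: "card (layer k b) = (\<Prod>j<k. b j)"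
proof (induction k)
  case 0
  have "layer 0 b = {[]}" unfolding layer_def by auto
  then show ?case by simp
next
  case (Suc k)
  have inj: "inj_on (\<lambda>(xs, i). xs @ [i]) (layer k b \<times> {..<b k})"
    by (rule inj_onI) auto
  have "card (layer (Suc k) b) = card (layer k b \<times> {..<b k})"
    unfolding layer_Suc by (rule card_image[OF inj])
  also have "\<dots> = card (layer k b) * b k" by (simp add: card_cartesian_product)
  finally show ?case using Suc by simp
qed

lemma verts_Suc: "verts (Suc n) b = verts n b \<union> layer (Suc n) b"
  unfolding verts_def layer_def by (rule set_eqI) (auto simp: le_Suc_eq)

lemma layer_butlast: "x \<in> layer (Suc n) b \<Longrightarrow> butlast x \<in> layer n b"
  unfolding layer_def by (auto simp: nth_butlast)

lemma good_finite: "finite (good n b)"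
  unfolding good_def by (rule finite_subset[of _ "(verts n b - {[]}) \<rightarrow>\<^sub>E (verts n b - {[]})"])
    (auto intro!: finite_PiE verts_finite)

lemma verts_mono_iff: "k \<le> n \<Longrightarrow> x \<in> verts k b \<longleftrightarrow> x \<in> verts n b \<and> length x \<le> k"
  unfolding verts_def by auto

lemma layer_iff: "k \<le> n \<Longrightarrow> x \<in> layer k b \<longleftrightarrow> x \<in> verts n b \<and> length x = k"
  unfolding verts_def layer_def by auto

lemma butlast_verts: "x \<in> verts n b \<Longrightarrow> butlast x \<in> verts n b"
  unfolding verts_def by (auto simp: nth_butlast)

lemma goodD:
  assumes "\<pi> \<in> good n b" "v \<in> verts n b" "v \<noteq> []"
  shows "\<pi> v \<in> verts n b" "\<pi> v \<noteq> []" "\<pi> (\<pi> v) = v" "\<pi> v \<noteq> v" "length (\<pi> v) = length v"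
    "butlast (\<pi> v) = butlast v \<or> butlast (\<pi> v) = \<pi> (butlast v)"
  using assms unfolding good_def by (auto simp: PiE_def Pi_def)

lemma goodE: "\<pi> \<in> good n b \<Longrightarrow> x \<notin> verts n b - {[]} \<Longrightarrow> \<pi> x = undefined"
  unfolding good_def by (auto simp: PiE_def extensional_def)

lemma invsD:
  assumes "\<rho> \<in> invs L f" "x \<in> L"
  shows "\<rho> x \<in> L" "\<rho> (\<rho> x) = x" "\<rho> x \<noteq> x" "f (\<rho> x) = f x"
  using assms unfolding invs_def by auto

lemma invsE: "\<rho> \<in> invs L f \<Longrightarrow> x \<notin> L \<Longrightarrow> \<rho> x = undefined"
  unfolding invs_def by (auto simp: PiE_def extensional_def)

lemma pf_eq_iff:
  assumes "\<pi> \<in> good n b" "a \<in> layer n b" "a' \<in> layer n b"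
  shows "pf \<pi> (a' @ [i]) = pf \<pi> (a @ [j]) \<longleftrightarrow> a' = a \<or> a' = \<pi> a"
proof -
  have "pf \<pi> (a' @ [i]) = {a', \<pi> a'}" "pf \<pi> (a @ [j]) = {a, \<pi> a}" unfolding pf_def by auto
  moreover have "{a', \<pi> a'} = {a, \<pi> a} \<longleftrightarrow> a' = a \<or> a' = \<pi> a"
  proof (cases "n = 0")
    case True
    then have "a = []" "a' = []" using assms unfolding layer_def by auto
    then show ?thesis by auto
  next
    case False
    then have v: "a \<in> verts n b" "a \<noteq> []" "a' \<in> verts n b" "a' \<noteq> []"
      using assms layer_sub[of n n b] unfolding layer_def by auto
    show ?thesis using goodD[OF assms(1) v(1,2)] goodD[OF assms(1) v(3,4)] by auto
  qed
  ultimately show ?thesis by simp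
qed

lemma layer_snoc: "x \<in> layer (Suc n) b \<Longrightarrow> x = butlast x @ [last x]"
proof -
  assume "x \<in> layer (Suc n) b"
  then have "x \<noteq> []" unfolding layer_def by auto
  then show ?thesis by simp
qed

lemma pf_eq_iff':
  assumes "\<pi> \<in> good n b" "x \<in> layer (Suc n) b" "y \<in> layer (Suc n) b"
  shows "pf \<pi> y = pf \<pi> x \<longleftrightarrow> butlast y = butlast x \<or> butlast y = \<pi> (butlast x)"
proof -
  have "pf \<pi> y = pf \<pi> (butlast y @ [last y])" "pf \<pi> x = pf \<pi> (butlast x @ [last x])"
    using layer_snoc[OF assms(2)] layer_snoc[OF assms(3)] by simp_all
  then show ?thesis
    using pf_eq_iff[OF assms(1) layer_butlast[OF assms(2)] layer_butlast[OF assms(3)], of "last y" "last x"]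
    by simp
qed

definition split_good :: "nat \<Rightarrow> (nat \<Rightarrow> nat) \<Rightarrow> (nat list \<Rightarrow> nat list) \<Rightarrow> (nat list \<Rightarrow> nat list) \<times> (nat list \<Rightarrow> nat list)" where
  "split_good n b \<pi>' = (restrict \<pi>' (verts n b - {[]}), restrict \<pi>' (layer (Suc n) b))"

definition merge_good :: "nat \<Rightarrow> (nat \<Rightarrow> nat) \<Rightarrow> (nat list \<Rightarrow> nat list) \<times> (nat list \<Rightarrow> nat list) \<Rightarrow> (nat list \<Rightarrow> nat list)" where
  "merge_good n b p = (\<lambda>x. if x \<in> verts n b - {[]} then fst p x else snd p x)"

lemma split_good_mem:
  assumes g: "\<pi>' \<in> good (Suc n) b"
  shows "split_good n b \<pi>' \<in> Sigma (good n b) (\<lambda>\<pi>. invs (layer (Suc n) b) (pf \<pi>))"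
proof -
  define \<pi> where "\<pi> = restrict \<pi>' (verts n b - {[]})"
  have vs: "verts n b \<subseteq> verts (Suc n) b" using verts_Suc by auto
  have pi_good: "\<pi> \<in> good n b"
    unfolding good_def
  proof (intro CollectI conjI ballI)
    show "\<pi> \<in> verts n b - {[]} \<rightarrow>\<^sub>E verts n b - {[]}"
    proof
      fix v assume v: "v \<in> verts n b - {[]}"
      then have v': "v \<in> verts (Suc n) b" "v \<noteq> []" using vs by auto
      show "\<pi> v \<in> verts n b - {[]}" using goodD[OF g v'] v verts_mono_iff[of n "Suc n" v b]
        verts_mono_iff[of n "Suc n" "\<pi>' v" b] unfolding \<pi>_def by auto
    next
      fix v assume "v \<notin> verts n b - {[]}" then show "\<pi> v = undefined" unfolding \<pi>_def by auto
    qed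
  next
    fix v assume v: "v \<in> verts n b - {[]}"
    then have v': "v \<in> verts (Suc n) b" "v \<noteq> []" using vs by auto
    have pv: "\<pi>' v \<in> verts n b - {[]}" using goodD[OF g v'] v verts_mono_iff[of n "Suc n" v b]
        verts_mono_iff[of n "Suc n" "\<pi>' v" b] by auto
    show "\<pi> (\<pi> v) = v" "\<pi> v \<noteq> v" "length (\<pi> v) = length v" using goodD[OF g v'] v pv unfolding \<pi>_def by auto
    show "butlast (\<pi> v) = butlast v \<or> butlast (\<pi> v) = \<pi> (butlast v)"
    proof (cases "butlast v = []")
      case True
      then have "length v = 1" using v by (cases v rule: rev_cases) auto
      then have "butlast (\<pi>' v) = []" using goodD(5)[OF g v'] by (cases "\<pi>' v" rule: rev_cases) auto
      then show ?thesis using True v unfolding \<pi>_def by auto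
    next
      case False
      have "butlast v \<in> verts n b" using v butlast_verts by auto
      then show ?thesis using False goodD(6)[OF g v'] v unfolding \<pi>_def by auto
    qed
  qed
  have rho: "restrict \<pi>' (layer (Suc n) b) \<in> invs (layer (Suc n) b) (pf \<pi>)"
    unfolding invs_def
  proof (intro CollectI conjI ballI)
    have lay: "\<pi>' x \<in> layer (Suc n) b" if x: "x \<in> layer (Suc n) b" for x
    proof -
      have x': "x \<in> verts (Suc n) b" "x \<noteq> []" using x layer_iff[of "Suc n" "Suc n" x b] by auto
      show ?thesis using goodD[OF g x'] x layer_iff[of "Suc n" "Suc n" x b] layer_iff[of "Suc n" "Suc n" "\<pi>' x" b] by auto
    qed
    show "restrict \<pi>' (layer (Suc n) b) \<in> layer (Suc n) b \<rightarrow>\<^sub>E layer (Suc n) b"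
      using lay by auto
    fix x assume x: "x \<in> layer (Suc n) b"
    have x': "x \<in> verts (Suc n) b" "x \<noteq> []" using x layer_iff[of "Suc n" "Suc n" x b] by auto
    show "restrict \<pi>' (layer (Suc n) b) (restrict \<pi>' (layer (Suc n) b) x) = x"
      "restrict \<pi>' (layer (Suc n) b) x \<noteq> x" using goodD[OF g x'] lay[OF x] x by auto
    have "pf \<pi> (\<pi>' x) = pf \<pi> x"
    proof (rule pf_eq_iff'[OF pi_good x lay[OF x], THEN iffD2])
      have bx: "butlast x \<in> layer n b" using layer_butlast[OF x] .
      show "butlast (\<pi>' x) = butlast x \<or> butlast (\<pi>' x) = \<pi> (butlast x)"
      proof (cases "n = 0")
        case True
        then have "butlast x = []" "butlast (\<pi>' x) = []" using bx layer_butlast[OF lay[OF x]] unfolding layer_def by auto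
        then show ?thesis by simp
      next
        case False
        have "butlast x \<in> verts n b" using bx layer_sub[of n n b] by auto
        moreover have "length (butlast x) = n" using bx unfolding layer_def by auto
        then have "butlast x \<noteq> []" using False by (metis list.size(3))
        ultimately have "butlast x \<in> verts n b - {[]}" by auto
        then show ?thesis using goodD(6)[OF g x'] unfolding \<pi>_def by auto
      qed
    qed
    then show "pf \<pi> (restrict \<pi>' (layer (Suc n) b) x) = pf \<pi> x"
      using x by simp
  qed
  show ?thesis unfolding split_good_def using pi_good rho \<pi>_def by auto
qed

lemma merge_good_mem:
  assumes g: "\<pi> \<in> good n b" and r: "\<rho> \<in> invs (layer (Suc n) b) (pf \<pi>)"
  shows "merge_good n b (\<pi>, \<rho>) \<in> good (Suc n) b"
proof -
  define \<pi>' where "\<pi>' = merge_good n b (\<pi>, \<rho>)"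
  have vs: "verts n b \<subseteq> verts (Suc n) b" using verts_Suc by auto
  have lvs: "layer (Suc n) b \<subseteq> verts (Suc n) b" using verts_Suc by auto
  have disj: "x \<in> layer (Suc n) b \<Longrightarrow> x \<notin> verts n b" for x unfolding layer_def verts_def by auto
  have lne: "x \<in> layer (Suc n) b \<Longrightarrow> x \<noteq> []" for x unfolding layer_def by auto
  have cases: "x \<in> verts (Suc n) b - {[]} \<Longrightarrow> x \<in> verts n b - {[]} \<or> x \<in> layer (Suc n) b" for x
    using verts_Suc by auto
  have A: "\<pi>' x = \<pi> x" "\<pi> x \<in> verts n b - {[]}" "\<pi> (\<pi> x) = x" "\<pi> x \<noteq> x" "length (\<pi> x) = length x"
     "butlast (\<pi> x) = butlast x \<or> butlast (\<pi> x) = \<pi> (butlast x)"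
    if x: "x \<in> verts n b - {[]}" for x
    using goodD[OF g, of x] x unfolding \<pi>'_def merge_good_def by auto
  have B: "\<pi>' x = \<rho> x" "\<rho> x \<in> layer (Suc n) b" "\<rho> (\<rho> x) = x" "\<rho> x \<noteq> x" "pf \<pi> (\<rho> x) = pf \<pi> x"
    if x: "x \<in> layer (Suc n) b" for x
    using invsD[OF r x] x disj unfolding \<pi>'_def merge_good_def by auto
  have "\<pi>' \<in> good (Suc n) b"
    unfolding good_def
  proof (intro CollectI conjI ballI)
    show "\<pi>' \<in> verts (Suc n) b - {[]} \<rightarrow>\<^sub>E verts (Suc n) b - {[]}"
    proof
      fix x assume x: "x \<in> verts (Suc n) b - {[]}"
      show "\<pi>' x \<in> verts (Suc n) b - {[]}"
      proof (cases "x \<in> layer (Suc n) b")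
        case True then show ?thesis using B(1,2)[OF True] lvs lne[of "\<rho> x"] by auto
      next
        case False then have x': "x \<in> verts n b - {[]}" using cases[OF x] by auto
        then show ?thesis using A(1,2)[OF x'] vs by auto
      qed
    next
      fix x assume x: "x \<notin> verts (Suc n) b - {[]}"
      then have "x \<notin> verts n b - {[]}" "x \<notin> layer (Suc n) b" using vs lvs lne by auto
      then show "\<pi>' x = undefined" using invsE[OF r] unfolding \<pi>'_def merge_good_def by auto
    qed
  next
    fix x assume x: "x \<in> verts (Suc n) b - {[]}"
    show "\<pi>' (\<pi>' x) = x"
    proof (cases "x \<in> layer (Suc n) b")
      case True then show ?thesis using B[OF True] B[OF B(2)[OF True]] by simp
    next
      case False then have x': "x \<in> verts n b - {[]}" using cases[OF x] by auto
      then show ?thesis using A[OF x'] A[OF A(2)[OF x']] by simp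
    qed
    show "\<pi>' x \<noteq> x"
    proof (cases "x \<in> layer (Suc n) b")
      case True then show ?thesis using B[OF True] by simp
    next
      case False then have x': "x \<in> verts n b - {[]}" using cases[OF x] by auto
      then show ?thesis using A[OF x'] by simp
    qed
    show "length (\<pi>' x) = length x"
    proof (cases "x \<in> layer (Suc n) b")
      case True then show ?thesis using B[OF True] True unfolding layer_def by simp
    next
      case False then have x': "x \<in> verts n b - {[]}" using cases[OF x] by auto
      then show ?thesis using A[OF x'] by simp
    qed
    show "butlast (\<pi>' x) = butlast x \<or> butlast (\<pi>' x) = \<pi>' (butlast x)"
    proof (cases "x \<in> layer (Suc n) b")
      case False
      then have x': "x \<in> verts n b - {[]}" using cases[OF x] by auto
      show ?thesis
      proof (cases "butlast x = []")
        case True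
        then have "length x = 1" using x by (cases x rule: rev_cases) auto
        then have "butlast (\<pi> x) = []" using A(5)[OF x'] by (cases "\<pi> x" rule: rev_cases) auto
        then show ?thesis using True A(1)[OF x'] by auto
      next
        case nb: False
        have "butlast x \<in> verts n b - {[]}" using x' nb butlast_verts by auto
        then have "\<pi>' (butlast x) = \<pi> (butlast x)" using A(1) by blast
        then show ?thesis using A(6)[OF x'] A(1)[OF x'] by simp
      qed
    next
      case True
      have "butlast (\<rho> x) = butlast x \<or> butlast (\<rho> x) = \<pi> (butlast x)"
        using pf_eq_iff'[OF g True B(2)[OF True]] B(5)[OF True] by simp
      moreover have "butlast (\<rho> x) = butlast x" if "butlast x = []"
      proof -
        have "length x = 1" using that lne[OF True] by (cases x rule: rev_cases) auto
        then have "length (\<rho> x) = 1" using B(2)[OF True] True unfolding layer_def by auto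
        then show ?thesis using that by (cases "\<rho> x" rule: rev_cases) auto
      qed
      moreover have "\<pi>' (butlast x) = \<pi> (butlast x)" if "butlast x \<noteq> []"
      proof -
        have "butlast x \<in> verts n b" using layer_butlast[OF True] layer_sub[of n n b] by auto
        then show ?thesis using A(1) that by auto
      qed
      ultimately show ?thesis using B(1)[OF True] by (cases "butlast x = []") auto
    qed
  qed
  then show ?thesis unfolding \<pi>'_def .
qed

lemma good_step_bij:
  "bij_betw (split_good n b) (good (Suc n) b) (Sigma (good n b) (\<lambda>\<pi>. invs (layer (Suc n) b) (pf \<pi>)))"
proof (rule bij_betw_byWitness[where f'="merge_good n b"])
  have disj: "x \<in> layer (Suc n) b \<Longrightarrow> x \<notin> verts n b" for x unfolding layer_def verts_def by auto
  show "\<forall>a\<in>good (Suc n) b. merge_good n b (split_good n b a) = a"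
  proof
    fix \<pi>' assume g: "\<pi>' \<in> good (Suc n) b"
    show "merge_good n b (split_good n b \<pi>') = \<pi>'"
    proof
      fix x
      show "merge_good n b (split_good n b \<pi>') x = \<pi>' x"
      proof (cases "x \<in> verts n b - {[]} \<or> x \<in> layer (Suc n) b")
        case True then show ?thesis unfolding merge_good_def split_good_def by auto
      next
        case False
        then have "x \<notin> verts (Suc n) b - {[]}" using verts_Suc by auto
        then show ?thesis using False goodE[OF g] unfolding merge_good_def split_good_def by auto
      qed
    qed
  qed
  show "\<forall>a'\<in>Sigma (good n b) (\<lambda>\<pi>. invs (layer (Suc n) b) (pf \<pi>)). split_good n b (merge_good n b a') = a'"
  proof clarify
    fix \<pi> \<rho> assume g: "\<pi> \<in> good n b" and r: "\<rho> \<in> invs (layer (Suc n) b) (pf \<pi>)"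
    have 1: "restrict (merge_good n b (\<pi>, \<rho>)) (verts n b - {[]}) = \<pi>"
    proof
      fix x show "restrict (merge_good n b (\<pi>, \<rho>)) (verts n b - {[]}) x = \<pi> x"
        using goodE[OF g, of x] unfolding merge_good_def by auto
    qed
    have 2: "restrict (merge_good n b (\<pi>, \<rho>)) (layer (Suc n) b) = \<rho>"
    proof
      fix x show "restrict (merge_good n b (\<pi>, \<rho>)) (layer (Suc n) b) x = \<rho> x"
        using invsE[OF r, of x] disj[of x] unfolding merge_good_def by auto
    qed
    show "split_good n b (merge_good n b (\<pi>, \<rho>)) = (\<pi>, \<rho>)"
      unfolding split_good_def using 1 2 by simp
  qed
  show "split_good n b ` good (Suc n) b \<subseteq> Sigma (good n b) (\<lambda>\<pi>. invs (layer (Suc n) b) (pf \<pi>))"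
    by (rule image_subsetI) (rule split_good_mem)
  show "merge_good n b ` Sigma (good n b) (\<lambda>\<pi>. invs (layer (Suc n) b) (pf \<pi>)) \<subseteq> good (Suc n) b"
  proof (rule image_subsetI)
    fix p assume "p \<in> Sigma (good n b) (\<lambda>\<pi>. invs (layer (Suc n) b) (pf \<pi>))"
    then obtain \<pi> \<rho> where "p = (\<pi>, \<rho>)" "\<pi> \<in> good n b" "\<rho> \<in> invs (layer (Suc n) b) (pf \<pi>)" by auto
    then show "merge_good n b p \<in> good (Suc n) b" using merge_good_mem by simp
  qed
qed

lemma card_good_Suc:
  "card (good (Suc n) b) = (\<Sum>\<pi>\<in>good n b. card (invs (layer (Suc n) b) (pf \<pi>)))"
proof -
  have "card (good (Suc n) b) = card (Sigma (good n b) (\<lambda>\<pi>. invs (layer (Suc n) b) (pf \<pi>)))"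
    by (rule bij_betw_same_card[OF good_step_bij])
  also have "\<dots> = (\<Sum>\<pi>\<in>good n b. card (invs (layer (Suc n) b) (pf \<pi>)))"
    by (rule card_SigmaI) (auto intro: good_finite invs_finite layer_finite)
  finally show ?thesis .
qed

lemma good0: "good 0 b = {\<lambda>_. undefined}"
proof -
  have "verts 0 b - {[]} = {}" unfolding verts_def by auto
  then show ?thesis unfolding good_def by auto
qed

lemma layer1_butlast: "x \<in> layer (Suc 0) b \<Longrightarrow> butlast x = []"
  unfolding layer_def by (cases x rule: rev_cases) auto

lemma invs_count0:
  assumes "even (b 0)"
  shows "card (invs (layer (Suc 0) b) (pf \<pi>)) = dfact (b 0 - 1)"
proof -
  define L where "L = layer (Suc 0) b"
  have pfc: "pf \<pi> x = {[], \<pi> []}" if "x \<in> L" for x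
    using layer1_butlast that unfolding pf_def L_def by auto
  have cL: "card L = b 0" unfolding L_def card_layer by simp
  show ?thesis
  proof (cases "L = {}")
    case True
    then have "b 0 = 0" using cL by simp
    then show ?thesis using True L_def by (simp add: invs_empty)
  next
    case False
    then have im: "pf \<pi> ` L = {{[], \<pi> []}}" using pfc by auto
    have fib: "{x\<in>L. pf \<pi> x = {[], \<pi> []}} = L" using pfc by auto
    have "card (invs L (pf \<pi>)) = (\<Prod>q\<in>pf \<pi> ` L. dfact (card {x\<in>L. pf \<pi> x = q} - 1))"
      by (rule invs_card) (use layer_finite[of "Suc 0" b] assms cL fib im in \<open>auto simp: L_def\<close>)
    then show ?thesis using im fib cL L_def by simp
  qed
qed

lemma children_card:
  assumes "a \<in> layer n b"
  shows "card {y\<in>layer (Suc n) b. butlast y = a} = b n"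
proof -
  have "{y\<in>layer (Suc n) b. butlast y = a} = (\<lambda>i. a @ [i]) ` {..<b n}"
    unfolding layer_Suc using assms by auto
  moreover have "inj_on (\<lambda>i. a @ [i]) {..<b n}" by (rule inj_onI) auto
  ultimately show ?thesis by (simp add: card_image)
qed

lemma good_layer:
  assumes g: "\<pi> \<in> good n b" and n: "n \<ge> 1" and a: "a \<in> layer n b"
  shows "\<pi> a \<in> layer n b" "\<pi> a \<noteq> a" "\<pi> (\<pi> a) = a"
proof -
  have a': "a \<in> verts n b" "a \<noteq> []" using a n layer_sub[of n n b] unfolding layer_def by auto
  show "\<pi> a \<in> layer n b" using goodD[OF g a'] layer_iff[of n n _ b] a by auto
  show "\<pi> a \<noteq> a" "\<pi> (\<pi> a) = a" using goodD[OF g a'] by auto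
qed

lemma invs_count:
  assumes g: "\<pi> \<in> good n b" and n: "n \<ge> 1"
  shows "card (invs (layer (Suc n) b) (pf \<pi>)) = dfact (2 * b n - 1) ^ (card (layer n b) div 2)"
proof -
  define L where "L = layer (Suc n) b"
  have fib: "{y\<in>L. pf \<pi> y = pf \<pi> x} = {y\<in>L. butlast y = butlast x} \<union> {y\<in>L. butlast y = \<pi> (butlast x)}"
    if x: "x \<in> L" for x
    using pf_eq_iff'[OF g x[unfolded L_def]] unfolding L_def by auto
  have cfib: "card {y\<in>L. pf \<pi> y = pf \<pi> x} = 2 * b n" if x: "x \<in> L" for x
  proof -
    have a: "butlast x \<in> layer n b" using layer_butlast x L_def by auto
    have "card ({y\<in>L. butlast y = butlast x} \<union> {y\<in>L. butlast y = \<pi> (butlast x)}) =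
        card {y\<in>L. butlast y = butlast x} + card {y\<in>L. butlast y = \<pi> (butlast x)}"
      by (rule card_Un_disjoint) (use good_layer[OF g n a] layer_finite in \<open>auto simp: L_def\<close>)
    also have "\<dots> = 2 * b n" unfolding L_def using children_card[OF a] children_card[OF good_layer(1)[OF g n a]] by simp
    finally show ?thesis using fib[OF x] by simp
  qed
  have "card (invs L (pf \<pi>)) = (\<Prod>q\<in>pf \<pi> ` L. dfact (card {x\<in>L. pf \<pi> x = q} - 1))"
    by (rule invs_card) (use layer_finite cfib in \<open>auto simp: L_def\<close>)
  also have "\<dots> = (\<Prod>q\<in>pf \<pi> ` L. dfact (2 * b n - 1))"
  proof (rule prod.cong[OF refl])
    fix q assume "q \<in> pf \<pi> ` L"
    then obtain x where "x \<in> L" "q = pf \<pi> x" by auto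
    then show "dfact (card {x\<in>L. pf \<pi> x = q} - 1) = dfact (2 * b n - 1)" using cfib by simp
  qed
  also have "\<dots> = dfact (2 * b n - 1) ^ card (pf \<pi> ` L)" by simp
  also have "\<dots> = dfact (2 * b n - 1) ^ (card (layer n b) div 2)"
  proof (cases "b n = 0")
    case True then show ?thesis by simp
  next
    case False
    define h where "h = (\<lambda>a. {a, \<pi> a})"
    have im: "pf \<pi> ` L = h ` layer n b"
    proof
      show "pf \<pi> ` L \<subseteq> h ` layer n b" unfolding pf_def h_def L_def using layer_butlast by blast
      show "h ` layer n b \<subseteq> pf \<pi> ` L"
      proof
        fix q assume "q \<in> h ` layer n b"
        then obtain a where a: "a \<in> layer n b" "q = h a" by auto
        have "a @ [0] \<in> L" unfolding L_def layer_Suc using a False by auto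
        moreover have "pf \<pi> (a @ [0]) = q" unfolding pf_def h_def a by simp
        ultimately show "q \<in> pf \<pi> ` L" by (metis image_eqI)
      qed
    qed
    have hfib: "{a'\<in>layer n b. h a' = h a} = {a, \<pi> a}" if a: "a \<in> layer n b" for a
    proof
      show "{a'\<in>layer n b. h a' = h a} \<subseteq> {a, \<pi> a}" unfolding h_def by auto
      show "{a, \<pi> a} \<subseteq> {a'\<in>layer n b. h a' = h a}"
        using good_layer[OF g n a] a unfolding h_def by auto
    qed
    have "card (layer n b) = (\<Sum>y\<in>h ` layer n b. card {x\<in>layer n b. h x = y})"
      by (rule card_fibers[OF layer_finite])
    also have "\<dots> = (\<Sum>y\<in>h ` layer n b. 2)"
    proof (rule sum.cong[OF refl])
      fix y assume "y \<in> h ` layer n b"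
      then obtain a where a: "a \<in> layer n b" "y = h a" by auto
      then show "card {x\<in>layer n b. h x = y} = 2" using hfib[OF a(1)] good_layer(2)[OF g n a(1)] by auto
    qed
    also have "\<dots> = 2 * card (h ` layer n b)" by simp
    finally have "card (h ` layer n b) = card (layer n b) div 2" by simp
    then show ?thesis using im by simp
  qed
  finally show ?thesis unfolding L_def .
qed

lemma card_good1: "even (b 0) \<Longrightarrow> card (good (Suc 0) b) = dfact (b 0 - 1)"
  unfolding card_good_Suc good0 using invs_count0 by simp

lemma card_good_step: "n \<ge> 1 \<Longrightarrow> card (good (Suc n) b) = card (good n b) * dfact (2 * b n - 1) ^ (card (layer n b) div 2)"
  unfolding card_good_Suc using invs_count by simp

lemma card_good:
  assumes "even (b 0)" "n \<ge> 1"
  shows "card (good n b) = dfact (b 0 - 1) * (\<Prod>k\<in>{1..<n}. dfact (2 * b k - 1) ^ (card (layer k b) div 2))"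
  using assms(2)
proof (induction n rule: dec_induct)
  case base then show ?case using card_good1[of b] assms(1) by simp
next
  case (step n)
  then show ?case using card_good_step[of n b] by (simp add: prod.atLeastLessThan_Suc)
qed

definition edges :: "nat \<Rightarrow> (nat \<Rightarrow> nat) \<Rightarrow> nat list set set" where
  "edges n b = {{butlast xs, xs} | xs. xs \<in> verts n b \<and> xs \<noteq> []}"

lemma edges_image: "edges n b = (\<lambda>xs. {butlast xs, xs}) ` (verts n b - {[]})"
  unfolding edges_def by auto

lemma edge_inj: "inj_on (\<lambda>xs. {butlast xs, xs}) (- {[]})"
proof (rule inj_onI)
  fix x y :: "'a list" assume x: "x \<in> - {[]}" and y: "y \<in> - {[]}" and e: "{butlast x, x} = {butlast y, y}"
  have lx: "length (butlast x) < length x" using x by auto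
  have ly: "length (butlast y) < length y" using y by auto
  show "x = y"
  proof (rule ccontr)
    assume "x \<noteq> y"
    then have "x = butlast y" "y = butlast x" using e by (auto simp: doubleton_eq_iff)
    then show False using lx ly by auto
  qed
qed

lemma card_edges: "card (edges n b) = card (verts n b - {[]})"
  unfolding edges_image by (rule card_image) (rule inj_on_subset[OF edge_inj], auto)

lemma nil_verts: "[] \<in> verts n b" unfolding verts_def by auto

lemma card_fibers_ge2:
  assumes "finite A" "\<forall>a\<in>A. f a \<ge> (2::nat)" "sum f A \<le> 2 * card A" "a \<in> A"
  shows "f a = 2"
proof -
  have "sum f A = sum (\<lambda>a. 2 + (f a - 2)) A"
    using assms(2) by (intro sum.cong) auto
  also have "\<dots> = sum (\<lambda>_. 2) A + sum (\<lambda>a. f a - 2) A"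
    by (rule sum.distrib)
  finally have "sum f A = sum (\<lambda>_. 2) A + sum (\<lambda>a. f a - 2) A" .
  then have "sum (\<lambda>a. f a - 2) A = 0" using assms(3) by simp
  then have "f a - 2 = 0" using assms(1,4) by simp
  then show ?thesis using assms(2,4) by auto
qed

locale zl =
  fixes n :: nat and b :: "nat \<Rightarrow> nat" and l :: "nat list \<Rightarrow> nat"
  assumes adm1: "\<forall>w\<in>verts n b. length w \<ge> 2 \<longrightarrow> l (butlast (butlast w)) \<noteq> l w"
    and adm2: "\<forall>e\<in>edges n b. \<exists>e'\<in>edges n b. e' \<noteq> e \<and> l ` e' = l ` e"
    and exc: "real (card (edges n b)) / 2 - real (card (l ` verts n b)) + 1 = 0"
begin

abbreviation "V \<equiv> verts n b"
abbreviation "E \<equiv> edges n b"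
definition "LE = (\<lambda>e. l ` e) ` E"
definition "\<delta> y = Min (length ` {v\<in>V. l v = y})"
definition "u y = (SOME v. v \<in> V \<and> l v = y \<and> length v = \<delta> y)"
definition "fa y = {l (butlast (u y)), y}"

lemma finV: "finite V" by (rule verts_finite)
lemma finE: "finite E" unfolding edges_image using finV by simp
lemma finLE: "finite LE" unfolding LE_def using finE by simp

lemma cardE: "card E = card V - 1"
  using card_edges[of n b] nil_verts[of n b] finV by (simp add: card_Diff_singleton)

lemma cardL: "card (l ` V) = card E div 2 + 1" and evenE: "even (card E)"
proof -
  have "real (card (l ` V)) = real (card E) / 2 + 1" using exc by simp
  then have "2 * real (card (l ` V)) = real (card E) + 2" by simp
  then have h: "2 * card (l ` V) = card E + 2" by linarith
  then show "card (l ` V) = card E div 2 + 1" by simp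
  have "card E = 2 * (card (l ` V) - 1)" using h by linarith
  then show "even (card E)" by simp
qed

lemma delta_le: "v \<in> V \<Longrightarrow> \<delta> (l v) \<le> length v"
  unfolding \<delta>_def by (rule Min_le) (use finV in auto)

lemma u_props: assumes "y \<in> l ` V" shows "u y \<in> V" "l (u y) = y" "length (u y) = \<delta> y"
proof -
  have ne: "length ` {v\<in>V. l v = y} \<noteq> {}" using assms by auto
  have "\<delta> y \<in> length ` {v\<in>V. l v = y}" unfolding \<delta>_def by (rule Min_in) (use finV ne in auto)
  then have "\<exists>v. v \<in> V \<and> l v = y \<and> length v = \<delta> y" by auto
  then have "u y \<in> V \<and> l (u y) = y \<and> length (u y) = \<delta> y" unfolding u_def by (rule someI_ex)
  then show "u y \<in> V" "l (u y) = y" "length (u y) = \<delta> y" by auto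
qed

lemma delta_root: "\<delta> (l []) = 0"
  using delta_le[OF nil_verts] by simp

lemma u_ne: assumes "y \<in> l ` V" "y \<noteq> l []" shows "u y \<noteq> []"
  using u_props[OF assms(1)] assms(2) by auto

lemma fa_LE: assumes "y \<in> l ` V" "y \<noteq> l []" shows "fa y \<in> LE"
proof -
  have "{butlast (u y), u y} \<in> E" unfolding edges_image
    by (rule imageI) (use u_props(1)[OF assms(1)] u_ne[OF assms] in blast)
  moreover have "fa y = l ` {butlast (u y), u y}" unfolding fa_def using u_props(2)[OF assms(1)] by simp
  ultimately show ?thesis unfolding LE_def by (rule rev_image_eqI)
qed

lemma fa_distinct: assumes "y \<in> l ` V" "y \<noteq> l []" shows "l (butlast (u y)) \<noteq> y"
proof
  assume "l (butlast (u y)) = y"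
  moreover have "butlast (u y) \<in> V" using u_props[OF assms(1)] butlast_verts by auto
  ultimately have "\<delta> y \<le> length (butlast (u y))" using delta_le by force
  moreover have "length (butlast (u y)) < length (u y)" using u_ne[OF assms] by simp
  ultimately show False using u_props[OF assms(1)] by simp
qed

lemma fa_delta: assumes "y \<in> l ` V" "y \<noteq> l []" shows "\<delta> (l (butlast (u y))) < \<delta> y"
proof -
  have "butlast (u y) \<in> V" using u_props[OF assms(1)] butlast_verts by auto
  then have "\<delta> (l (butlast (u y))) \<le> length (butlast (u y))" by (rule delta_le)
  moreover have "length (butlast (u y)) < length (u y)" using u_ne[OF assms] by simp
  ultimately show ?thesis using u_props[OF assms(1)] by simp
qed

lemma fa_inj: "inj_on fa (l ` V - {l []})"
proof (rule inj_onI)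
  fix y y' assume y: "y \<in> l ` V - {l []}" and y': "y' \<in> l ` V - {l []}" and e: "fa y = fa y'"
  show "y = y'"
  proof (rule ccontr)
    assume ne: "y \<noteq> y'"
    then have "y = l (butlast (u y'))" "y' = l (butlast (u y))" using e unfolding fa_def by (auto simp: doubleton_eq_iff)
    then show False using fa_delta[of y] fa_delta[of y'] y y' by auto
  qed
qed

lemma fiber_ge2: assumes "le \<in> LE" shows "card {e\<in>E. l ` e = le} \<ge> 2"
proof -
  obtain e where e: "e \<in> E" "le = l ` e" using assms unfolding LE_def by (rule imageE) blast
  then obtain e' where e': "e' \<in> E" "e' \<noteq> e" "l ` e' = l ` e" using adm2 by meson
  have "{e, e'} \<subseteq> {e\<in>E. l ` e = le}" using e e' by auto
  moreover have "finite {e\<in>E. l ` e = le}" using finE by simp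
  ultimately have "card {e, e'} \<le> card {e\<in>E. l ` e = le}" by (rule card_mono[rotated])
  then show ?thesis using e'(2) by simp
qed

lemma counts: "card LE = card E div 2" "fa ` (l ` V - {l []}) = LE"
  "\<And>le. le \<in> LE \<Longrightarrow> card {e\<in>E. l ` e = le} = 2"
proof -
  have sumE: "card E = (\<Sum>le\<in>LE. card {e\<in>E. l ` e = le})"
    unfolding LE_def by (rule card_fibers[OF finE])
  have "(\<Sum>le\<in>LE. 2) \<le> (\<Sum>le\<in>LE. card {e\<in>E. l ` e = le})"
    by (rule sum_mono) (rule fiber_ge2)
  then have up: "2 * card LE \<le> card E" using sumE by simp
  have sub: "fa ` (l ` V - {l []}) \<subseteq> LE" using fa_LE by auto
  have "card (fa ` (l ` V - {l []})) = card (l ` V - {l []})" by (rule card_image[OF fa_inj])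
  also have "\<dots> = card (l ` V) - 1" using finV nil_verts[of n b] by (simp add: card_Diff_singleton)
  also have "\<dots> = card E div 2" using cardL by simp
  finally have lo: "card (fa ` (l ` V - {l []})) = card E div 2" .
  then have "card E div 2 \<le> card LE" using card_mono[OF finLE sub] by simp
  then show cLE: "card LE = card E div 2" using up evenE by linarith
  show "fa ` (l ` V - {l []}) = LE" by (rule card_subset_eq[OF finLE sub]) (use lo cLE in simp)
  fix le assume le: "le \<in> LE"
  show "card {e\<in>E. l ` e = le} = 2"
    by (rule card_fibers_ge2[OF finLE _ _ le]) (use fiber_ge2 sumE cLE evenE in auto)
qed

lemma LE_fa: assumes "le \<in> LE" obtains y where "y \<in> l ` V" "y \<noteq> l []" "le = fa y"
  using assms counts(2) by blast

lemma edge_LE: assumes "v \<in> V" "v \<noteq> []" shows "{l (butlast v), l v} \<in> LE"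
proof -
  have "{butlast v, v} \<in> E" unfolding edges_image
    by (rule imageI) (use assms in blast)
  moreover have "{l (butlast v), l v} = l ` {butlast v, v}" by simp
  ultimately show ?thesis unfolding LE_def by (rule rev_image_eqI)
qed

end

context zl begin

lemma fa_split:
  assumes "y \<in> l ` V" "y \<noteq> l []" "{p, q} = fa y"
  shows "(p = l (butlast (u y)) \<and> q = y) \<or> (p = y \<and> q = l (butlast (u y)))"
  using assms(3) unfolding fa_def by (auto simp: doubleton_eq_iff)

lemma depth: "v \<in> V \<Longrightarrow> \<delta> (l v) = length v"
proof (induction "length v" arbitrary: v rule: less_induct)
  case less
  show ?case
  proof (cases "v = []")
    case True then show ?thesis using delta_root by simp
  next
    case False
    define p where "p = butlast v"
    define k where "k = length p"
    have pV: "p \<in> V" using less.prems butlast_verts p_def by auto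
    have lv: "length v = Suc k" using False p_def k_def by simp
    have IHp: "\<delta> (l p) = k" using less.hyps[of p] pV lv k_def by simp
    have "{l p, l v} \<in> LE" using edge_LE[OF less.prems False] p_def by simp
    then obtain y where y: "y \<in> l ` V" "y \<noteq> l []" "{l p, l v} = fa y" by (rule LE_fa)
    define a where "a = l (butlast (u y))"
    have ay: "a \<noteq> y" using fa_distinct[OF y(1,2)] a_def by simp
    have uy: "u y \<in> V" "l (u y) = y" "length (u y) = \<delta> y" using u_props[OF y(1)] by auto
    have une: "u y \<noteq> []" using u_ne[OF y(1,2)] .
    have wV: "butlast (u y) \<in> V" using uy butlast_verts by auto
    have dv: "\<delta> (l v) \<le> Suc k" using delta_le[OF less.prems] lv by simp
    from fa_split[OF y] a_def
    have "(l p = a \<and> l v = y) \<or> (l p = y \<and> l v = a)" by simp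
    then show ?thesis
    proof
      assume c: "l p = a \<and> l v = y"
      have "\<delta> (l p) \<le> length (butlast (u y))" using delta_le[OF wV] c a_def by simp
      moreover have "length (u y) > 0" using une by simp
      ultimately have "Suc k \<le> \<delta> y" using IHp uy by simp
      then show ?thesis using c dv lv by simp
    next
      assume c: "l p = y \<and> l v = a"
      have luy: "length (u y) = k" using uy c IHp by simp
      then have k1: "k \<ge> 1" using une by (cases k) auto
      have "\<delta> (l (butlast (u y))) = length (butlast (u y))"
        using less.hyps[of "butlast (u y)"] wV luy lv by simp
      then have dlv: "\<delta> (l v) = k - 1" using c a_def luy by simp
      have pne: "p \<noteq> []" using k1 k_def by auto
      define g where "g = butlast p"
      have gV: "g \<in> V" using pV butlast_verts g_def by auto
      have lg: "length g = k - 1" using g_def k_def by simp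
      have IHg: "\<delta> (l g) = k - 1" using less.hyps[of g] gV lg lv by simp
      have "{l g, l p} \<in> LE" using edge_LE[OF pV pne] g_def by simp
      then obtain z where z: "z \<in> l ` V" "z \<noteq> l []" "{l g, l p} = fa z" by (rule LE_fa)
      define a' where "a' = l (butlast (u z))"
      have az: "a' \<noteq> z" using fa_distinct[OF z(1,2)] a'_def by simp
      have uz: "u z \<in> V" "l (u z) = z" "length (u z) = \<delta> z" using u_props[OF z(1)] by auto
      have zne: "u z \<noteq> []" using u_ne[OF z(1,2)] .
      have wzV: "butlast (u z) \<in> V" using uz butlast_verts by auto
      from fa_split[OF z] a'_def
      have "(l g = a' \<and> l p = z) \<or> (l g = z \<and> l p = a')" by simp
      then show ?thesis
      proof
        assume c2: "l g = a' \<and> l p = z"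
        then have "z = y" using c by simp
        then have "{l g, l p} = {l v, l p}" using z(3) y(3) by (simp add: insert_commute)
        moreover have "l g \<noteq> l p" using c2 az by simp
        ultimately have "l g = l v" by (auto simp: doubleton_eq_iff)
        moreover have "length v \<ge> 2" using lv k1 by simp
        ultimately show ?thesis using adm1 less.prems g_def p_def by auto
      next
        assume c2: "l g = z \<and> l p = a'"
        have "\<delta> (l p) \<le> length (butlast (u z))" using delta_le[OF wzV] c2 a'_def by simp
        moreover have "length (u z) > 0" using zne by simp
        ultimately have "Suc k \<le> \<delta> z" using IHp uz by simp
        then show ?thesis using c2 IHg by simp
      qed
    qed
  qed
qed

lemma root_only: "v \<in> V \<Longrightarrow> l v = l [] \<Longrightarrow> v = []"
  using depth[of v] depth[OF nil_verts] by simp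

lemma S_parent:
  assumes v: "v \<in> V" "l v \<noteq> l []"
  shows "v \<noteq> []" "l (butlast v) = l (butlast (u (l v)))"
proof -
  show vne: "v \<noteq> []" using v by auto
  define y where "y = l v"
  have y: "y \<in> l ` V" "y \<noteq> l []" using v y_def by auto
  have "{l (butlast v), y} \<in> LE" using edge_LE[OF v(1) vne] y_def by simp
  then obtain z where z: "z \<in> l ` V" "z \<noteq> l []" "{l (butlast v), y} = fa z" by (rule LE_fa)
  have bV: "butlast v \<in> V" using v butlast_verts by auto
  from fa_split[OF z]
  have "(l (butlast v) = l (butlast (u z)) \<and> y = z) \<or> (l (butlast v) = z \<and> y = l (butlast (u z)))" .
  then show "l (butlast v) = l (butlast (u (l v)))"
  proof
    assume "l (butlast v) = l (butlast (u z)) \<and> y = z" then show ?thesis using y_def by simp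
  next
    assume c: "l (butlast v) = z \<and> y = l (butlast (u z))"
    have uz: "u z \<in> V" "length (u z) = \<delta> z" using u_props[OF z(1)] by auto
    have "\<delta> (l (butlast (u z))) = length (butlast (u z))" using depth butlast_verts uz by auto
    then have "\<delta> y = \<delta> z - 1" using c uz by simp
    moreover have "\<delta> z = length v - 1" using c depth[OF bV] by simp
    moreover have "\<delta> y = length v" using depth[OF v(1)] y_def by simp
    moreover have "length v > 0" using vne by simp
    ultimately have False by linarith
    then show ?thesis ..
  qed
qed

lemma S_card:
  assumes y: "y \<in> l ` V" "y \<noteq> l []"
  shows "card {v\<in>V. l v = y} = 2"
proof -
  define S where "S = {v\<in>V. l v = y}"
  define F where "F = {e\<in>E. l ` e = fa y}"
  define h where "h = (\<lambda>x::nat list. {butlast x, x})"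
  have Sne: "S \<subseteq> - {[]}" using S_parent(1) y unfolding S_def by auto
  have inj: "inj_on h S" unfolding h_def by (rule inj_on_subset[OF edge_inj Sne])
  have "h ` S = F"
  proof
    show "h ` S \<subseteq> F"
    proof
      fix e assume "e \<in> h ` S"
      then obtain v where v: "v \<in> V" "l v = y" "e = h v" unfolding S_def by auto
      have "e \<in> E" unfolding edges_image h_def v(3) using S_parent(1)[of v] v y by auto
      moreover have "l ` e = fa y" using S_parent(2)[of v] v y unfolding h_def fa_def by auto
      ultimately show "e \<in> F" unfolding F_def by simp
    qed
    show "F \<subseteq> h ` S"
    proof
      fix e assume e: "e \<in> F"
      then obtain x where x: "x \<in> V" "x \<noteq> []" "e = {butlast x, x}" unfolding F_def edges_image by auto
      have "{l (butlast x), l x} = fa y" using e x unfolding F_def by simp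
      then have "(l (butlast x) = l (butlast (u y)) \<and> l x = y) \<or> (l (butlast x) = y \<and> l x = l (butlast (u y)))"
        by (rule fa_split[OF y])
      moreover have "\<not> (l (butlast x) = y \<and> l x = l (butlast (u y)))"
      proof
        assume c: "l (butlast x) = y \<and> l x = l (butlast (u y))"
        have "\<delta> y = length x - 1" using depth[of "butlast x"] butlast_verts x c by auto
        moreover have "\<delta> (l (butlast (u y))) = length x" using depth[OF x(1)] c by simp
        moreover have "\<delta> (l (butlast (u y))) < \<delta> y" by (rule fa_delta[OF y])
        ultimately show False by simp
      qed
      ultimately have "l x = y" by blast
      then show "e \<in> h ` S" unfolding S_def h_def using x by auto
    qed
  qed
  then have "card S = card F" using card_image[OF inj] by simp
  also have "card F = 2" unfolding F_def by (rule counts(3)[OF fa_LE[OF y]])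
  finally show ?thesis unfolding S_def .
qed

lemma partner:
  assumes v: "v \<in> V" "v \<noteq> []"
  obtains w where "{x\<in>V. l x = l v} = {v, w}" "w \<noteq> v"
proof -
  have "l v \<noteq> l []" using root_only v by auto
  then have "card {x\<in>V. l x = l v} = 2" using S_card v by auto
  then obtain x1 x2 where e: "{x\<in>V. l x = l v} = {x1, x2}" "x1 \<noteq> x2" by (auto simp: card_2_iff)
  have "v \<in> {x1, x2}" using e v by blast
  then show ?thesis using that e by (auto simp: insert_commute)
qed

end

definition pi_of :: "nat \<Rightarrow> (nat \<Rightarrow> nat) \<Rightarrow> (nat list \<Rightarrow> 'c) \<Rightarrow> nat list \<Rightarrow> nat list" where
  "pi_of n b l = restrict (\<lambda>v. THE w. w \<in> verts n b \<and> w \<noteq> v \<and> l w = l v) (verts n b - {[]})"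

definition rep :: "nat \<Rightarrow> (nat \<Rightarrow> nat) \<Rightarrow> (nat list \<Rightarrow> 'c) \<Rightarrow> (nat list \<Rightarrow> nat list) \<Rightarrow> bool" where
  "rep n b l \<pi> \<longleftrightarrow> \<pi> \<in> good n b \<and>
     (\<forall>v\<in>verts n b. \<forall>w\<in>verts n b. l v = l w \<longleftrightarrow> (v = w \<or> (v \<noteq> [] \<and> w = \<pi> v)))"

context zl begin

abbreviation "P \<equiv> pi_of n b l"

lemma Sv: assumes v: "v \<in> V" "v \<noteq> []"
  shows "{x\<in>V. l x = l v} = {v, P v}" "P v \<noteq> v"
proof -
  obtain w where w: "{x\<in>V. l x = l v} = {v, w}" "w \<noteq> v" using partner[OF v] .
  have "(THE w'. w' \<in> V \<and> w' \<noteq> v \<and> l w' = l v) = w"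
  proof (rule the_equality)
    show "w \<in> V \<and> w \<noteq> v \<and> l w = l v" using w by blast
    fix w' assume "w' \<in> V \<and> w' \<noteq> v \<and> l w' = l v"
    then have "w' \<in> {v, w}" "w' \<noteq> v" using w by blast+
    then show "w' = w" by auto
  qed
  then have "P v = w" unfolding pi_of_def using v by simp
  then show "{x\<in>V. l x = l v} = {v, P v}" "P v \<noteq> v" using w by auto
qed

lemma Pprops: assumes v: "v \<in> V" "v \<noteq> []"
  shows "P v \<in> V" "l (P v) = l v" "P v \<noteq> []" "P (P v) = v" "length (P v) = length v"
proof -
  have S: "{x\<in>V. l x = l v} = {v, P v}" "P v \<noteq> v" using Sv[OF v] by auto
  have "P v \<in> {x\<in>V. l x = l v}" using S by blast
  then show pV: "P v \<in> V" and lP: "l (P v) = l v" by auto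
  have "l v \<noteq> l []" using root_only v by auto
  then show pne: "P v \<noteq> []" using lP by auto
  have S2: "{x\<in>V. l x = l (P v)} = {P v, P (P v)}" "P (P v) \<noteq> P v" using Sv[OF pV pne] by auto
  then have "{v, P v} = {P v, P (P v)}" using S lP by simp
  then show "P (P v) = v" using S2(2) S(2) by (auto simp: doubleton_eq_iff)
  show "length (P v) = length v" using depth[OF pV] depth[OF v(1)] lP by simp
qed

lemma rep_P: "rep n b l P"
  unfolding rep_def
proof (intro conjI ballI)
  show "P \<in> good n b"
    unfolding good_def
  proof (intro CollectI conjI ballI)
    show "P \<in> V - {[]} \<rightarrow>\<^sub>E V - {[]}"
    proof
      fix v assume "v \<in> V - {[]}" then show "P v \<in> V - {[]}" using Pprops by auto
    next
      fix v assume "v \<notin> V - {[]}" then show "P v = undefined" unfolding pi_of_def by auto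
    qed
  next
    fix v assume v': "v \<in> V - {[]}"
    then have v: "v \<in> V" "v \<noteq> []" by auto
    show "P (P v) = v" "P v \<noteq> v" "length (P v) = length v" using Pprops[OF v] Sv[OF v] by auto
    show "butlast (P v) = butlast v \<or> butlast (P v) = P (butlast v)"
    proof (cases "butlast v = []")
      case True
      then have "length v = 1" using v by (cases v rule: rev_cases) auto
      then have "length (P v) = 1" using Pprops(5)[OF v] by simp
      then have "butlast (P v) = []" by (cases "P v" rule: rev_cases) auto
      then show ?thesis using True by simp
    next
      case False
      have bV: "butlast v \<in> V" using v butlast_verts by auto
      have lne: "l v \<noteq> l []" using root_only v by auto
      have lpne: "l (P v) \<noteq> l []" using lne Pprops(2)[OF v] by simp
      have "l (butlast (P v)) = l (butlast (u (l (P v))))" using S_parent(2)[OF Pprops(1)[OF v] lpne] .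
      also have "\<dots> = l (butlast v)" using S_parent(2)[OF v(1) lne] Pprops(2)[OF v] by simp
      finally have "butlast (P v) \<in> {x\<in>V. l x = l (butlast v)}"
        using butlast_verts Pprops(1)[OF v] by auto
      then show ?thesis using Sv(1)[OF bV False] by auto
    qed
  qed
next
  fix v w assume v: "v \<in> V" and w: "w \<in> V"
  show "l v = l w \<longleftrightarrow> (v = w \<or> (v \<noteq> [] \<and> w = P v))"
  proof (cases "v = []")
    case True
    then show ?thesis using root_only[OF w] by auto
  next
    case False
    have "l v = l w \<longleftrightarrow> w \<in> {x\<in>V. l x = l v}" using w by auto
    also have "\<dots> \<longleftrightarrow> w \<in> {v, P v}" using Sv(1)[OF v False] by simp
    finally show ?thesis using False by auto
  qed
qed

end

lemma rep_zl:
  assumes r: "rep n b l \<pi>"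
  shows "zl n b l"
proof -
  have g: "\<pi> \<in> good n b" and k: "\<And>v w. v \<in> verts n b \<Longrightarrow> w \<in> verts n b \<Longrightarrow> l v = l w \<longleftrightarrow> (v = w \<or> (v \<noteq> [] \<and> w = \<pi> v))"
    using r unfolding rep_def by auto
  define V where "V = verts n b"
  have finV: "finite V" unfolding V_def by (rule verts_finite)
  show ?thesis
  proof
    show "\<forall>w\<in>verts n b. 2 \<le> length w \<longrightarrow> l (butlast (butlast w)) \<noteq> l w"
    proof (intro ballI impI)
      fix w assume w: "w \<in> verts n b" and lw: "2 \<le> length w"
      define g0 where "g0 = butlast (butlast w)"
      have gV: "g0 \<in> verts n b" using w butlast_verts g0_def by auto
      have lg: "length g0 = length w - 2" using g0_def by simp
      show "l (butlast (butlast w)) \<noteq> l w"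
      proof
        assume "l (butlast (butlast w)) = l w"
        then have "g0 = w \<or> (g0 \<noteq> [] \<and> w = \<pi> g0)" using k[OF gV w] g0_def by simp
        moreover have "g0 \<noteq> w" using lg lw by auto
        ultimately have "g0 \<noteq> []" "w = \<pi> g0" by auto
        then have "length w = length g0" using goodD(5)[OF g gV] by simp
        then show False using lg lw by simp
      qed
    qed
    show "\<forall>e\<in>edges n b. \<exists>e'\<in>edges n b. e' \<noteq> e \<and> l ` e' = l ` e"
    proof
      fix e assume "e \<in> edges n b"
      then obtain x where x: "x \<in> verts n b" "x \<noteq> []" "e = {butlast x, x}" unfolding edges_image by auto
      have px: "\<pi> x \<in> verts n b" "\<pi> x \<noteq> []" "\<pi> x \<noteq> x" "length (\<pi> x) = length x"
        "butlast (\<pi> x) = butlast x \<or> butlast (\<pi> x) = \<pi> (butlast x)" using goodD[OF g x(1,2)] by auto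
      define e' where "e' = {butlast (\<pi> x), \<pi> x}"
      have "e' \<in> edges n b" unfolding edges_image e'_def using px by auto
      moreover have "e' \<noteq> e"
      proof
        assume "e' = e"
        then have "x \<in> e'" using x by auto
        moreover have "x \<noteq> butlast (\<pi> x)" using px(4) x(2) by (metis length_butlast diff_less length_greater_0_conv zero_less_one less_irrefl)
        ultimately show False using px(3) unfolding e'_def by auto
      qed
      moreover have "l ` e' = l ` e"
      proof -
        have bV: "butlast x \<in> verts n b" using x butlast_verts by auto
        have "l (\<pi> x) = l x" using k[OF x(1) px(1)] x by simp
        moreover have "l (butlast (\<pi> x)) = l (butlast x)"
        proof (cases "butlast (\<pi> x) = butlast x")
          case False
          then have e: "butlast (\<pi> x) = \<pi> (butlast x)" using px(5) by simp
          show ?thesis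
          proof (cases "butlast x = []")
            case True
            then have "length x = 1" using x by (cases x rule: rev_cases) auto
            then have "butlast (\<pi> x) = []" using px(4) by (cases "\<pi> x" rule: rev_cases) auto
            then show ?thesis using True by simp
          next
            case nb: False
            have "\<pi> (butlast x) \<in> verts n b" using goodD(1)[OF g bV nb] .
            then have "l (butlast x) = l (\<pi> (butlast x))" using k[OF bV] nb by blast
            then show ?thesis using e by simp
          qed
        qed simp
        ultimately show ?thesis unfolding e'_def x(3) by simp
      qed
      ultimately show "\<exists>e'\<in>edges n b. e' \<noteq> e \<and> l ` e' = l ` e" by blast
    qed
    show "real (card (edges n b)) / 2 - real (card (l ` verts n b)) + 1 = 0"
    proof -
      define A where "A = V - {[]}"
      have finA: "finite A" using finV A_def by simp
      have lV: "l ` V = insert (l []) (l ` A)" using nil_verts[of n b] unfolding A_def V_def by auto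
      have nin: "l [] \<notin> l ` A"
      proof
        assume "l [] \<in> l ` A"
        then obtain v where "v \<in> A" "l v = l []" by auto
        then have vv: "v \<in> verts n b" "v \<noteq> []" "l v = l []" unfolding A_def V_def by auto
        then have "\<pi> v = []" using k[OF vv(1) nil_verts] by auto
        then show False using goodD(2)[OF g vv(1,2)] by simp
      qed
      have "card A = (\<Sum>y\<in>l ` A. card {x\<in>A. l x = y})" by (rule card_fibers[OF finA])
      also have "\<dots> = (\<Sum>y\<in>l ` A. 2)"
      proof (rule sum.cong[OF refl])
        fix y assume "y \<in> l ` A"
        then obtain v where v: "v \<in> A" "y = l v" by auto
        have vv: "v \<in> verts n b" "v \<noteq> []" using v A_def V_def by auto
        have "{x\<in>A. l x = y} = {v, \<pi> v}"
        proof
          show "{x\<in>A. l x = y} \<subseteq> {v, \<pi> v}"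
          proof
            fix x assume "x \<in> {x\<in>A. l x = y}"
            then have x: "x \<in> verts n b" "l v = l x" using v unfolding A_def V_def by auto
            then show "x \<in> {v, \<pi> v}" using k[OF vv(1) x(1)] by auto
          qed
          have "l v = l (\<pi> v)" using k[OF vv(1) goodD(1)[OF g vv]] vv(2) by simp
          then show "{v, \<pi> v} \<subseteq> {x\<in>A. l x = y}" using goodD(1,2)[OF g vv] v vv unfolding A_def V_def by auto
        qed
        then show "card {x\<in>A. l x = y} = 2" using goodD(4)[OF g vv] by auto
      qed
      also have "\<dots> = 2 * card (l ` A)" by simp
      finally have cA: "card A = 2 * card (l ` A)" .
      have "card (l ` V) = card (l ` A) + 1" using lV nin finA by simp
      moreover have "card (edges n b) = card A" using card_edges A_def V_def by simp
      ultimately show ?thesis using cA unfolding V_def by simp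
    qed
  qed
qed

lemma rep_unique: assumes "rep n b l \<pi>" "rep n b l \<pi>'" shows "\<pi> = \<pi>'"
proof
  fix v
  have g: "\<pi> \<in> good n b" "\<pi>' \<in> good n b" using assms unfolding rep_def by auto
  show "\<pi> v = \<pi>' v"
  proof (cases "v \<in> verts n b - {[]}")
    case True
    then have v: "v \<in> verts n b" "v \<noteq> []" by auto
    have pv: "\<pi> v \<in> verts n b" "\<pi> v \<noteq> v" using goodD[OF g(1) v] by auto
    have "l v = l (\<pi> v)" using assms(1) v pv unfolding rep_def by auto
    then have "\<pi> v = v \<or> \<pi> v = \<pi>' v" using assms(2) v pv unfolding rep_def by auto
    then show ?thesis using pv by auto
  next
    case False
    then show ?thesis using goodE[OF g(1)] goodE[OF g(2)] by simp
  qed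
qed

lemma card_quotient_fun:
  assumes "finite A"
  shows "card (A // {(x, y). x \<in> A \<and> y \<in> A \<and> g x = g y}) = card (g ` A)"
proof -
  define R where "R = {(x, y). x \<in> A \<and> y \<in> A \<and> g x = g y}"
  define F where "F = (\<lambda>c. {x\<in>A. g x = c})"
  have "A // R = F ` (g ` A)"
  proof
    show "A // R \<subseteq> F ` (g ` A)"
    proof
      fix X assume "X \<in> A // R"
      then obtain x where x: "x \<in> A" "X = R `` {x}" unfolding quotient_def by auto
      then have "X = F (g x)" unfolding R_def F_def by auto
      then show "X \<in> F ` (g ` A)" using x by auto
    qed
    show "F ` (g ` A) \<subseteq> A // R"
    proof
      fix X assume "X \<in> F ` (g ` A)"
      then obtain x where x: "x \<in> A" "X = F (g x)" by auto
      then have "X = R `` {x}" unfolding R_def F_def by auto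
      then show "X \<in> A // R" using x unfolding quotient_def by auto
    qed
  qed
  moreover have "inj_on F (g ` A)"
  proof (rule inj_onI)
    fix c c' assume c: "c \<in> g ` A" "c' \<in> g ` A" "F c = F c'"
    then obtain x where "x \<in> A" "g x = c" by auto
    then have "x \<in> F c" unfolding F_def by auto
    then have "x \<in> F c'" using c by simp
    then show "c = c'" using \<open>g x = c\<close> unfolding F_def by auto
  qed
  ultimately show ?thesis unfolding R_def by (simp add: card_image)
qed

lemma exists_perm:
  assumes A: "finite A" and sub: "l ` V \<subseteq> A" "l' ` V \<subseteq> A"
    and k: "\<forall>v\<in>V. \<forall>w\<in>V. l v = l w \<longleftrightarrow> l' v = l' w"
  shows "\<exists>\<sigma>. bij_betw \<sigma> A A \<and> (\<forall>v\<in>V. \<sigma> (l v) = l' v)"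
proof -
  define h where "h = (\<lambda>y. l' (inv_into V l y))"
  have hv: "h (l v) = l' v" if v: "v \<in> V" for v
  proof -
    have "inv_into V l (l v) \<in> V" "l (inv_into V l (l v)) = l v"
      using v by (auto intro: inv_into_into f_inv_into_f)
    then show ?thesis unfolding h_def using k v by blast
  qed
  have hb: "bij_betw h (l ` V) (l' ` V)"
  proof (rule bij_betw_imageI)
    show "inj_on h (l ` V)"
    proof (rule inj_onI)
      fix x y assume "x \<in> l ` V" "y \<in> l ` V" "h x = h y"
      then obtain v w where "v \<in> V" "w \<in> V" "x = l v" "y = l w" "l' v = l' w" using hv by auto
      then show "x = y" using k by auto
    qed
    show "h ` l ` V = l' ` V" using hv by (auto simp: image_iff)
  qed
  have "card (l ` V) = card (l' ` V)" using bij_betw_same_card[OF hb] .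
  moreover have "finite (l ` V)" "finite (l' ` V)" using sub A finite_subset by auto
  ultimately have "card (A - l ` V) = card (A - l' ` V)" using sub A by (simp add: card_Diff_subset)
  then obtain g where g: "bij_betw g (A - l ` V) (A - l' ` V)"
    using A by (metis finite_Diff finite_same_card_bij)
  define \<sigma> where "\<sigma> = (\<lambda>y. if y \<in> l ` V then h y else g y)"
  have b1: "bij_betw \<sigma> (l ` V) (l' ` V)" using hb unfolding \<sigma>_def by (rule bij_betw_cong[THEN iffD1, rotated]) auto
  have b2: "bij_betw \<sigma> (A - l ` V) (A - l' ` V)" using g unfolding \<sigma>_def by (rule bij_betw_cong[THEN iffD1, rotated]) auto
  have "bij_betw \<sigma> (l ` V \<union> (A - l ` V)) (l' ` V \<union> (A - l' ` V))"
    by (rule bij_betw_combine[OF b1 b2]) auto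
  moreover have "l ` V \<union> (A - l ` V) = A" "l' ` V \<union> (A - l' ` V) = A" using sub by auto
  ultimately have "bij_betw \<sigma> A A" by simp
  moreover have "\<forall>v\<in>V. \<sigma> (l v) = l' v" using hv unfolding \<sigma>_def by auto
  ultimately show ?thesis by blast
qed

lemma tv: "tree_verts t m d = verts t (branch t m d)" unfolding tree_verts_def verts_def by simp
lemma te: "tree_edges t m d = edges t (branch t m d)" unfolding tree_edges_def edges_def tv by simp

lemma Zchar: "l \<in> zero_excess_labelings t m d N r \<longleftrightarrow> l \<in> labelings t m d N r \<and> zl t (branch t m d) l"
  unfolding zero_excess_labelings_def admissible_def excess_def zl_def tv te by auto

lemma formula:
  assumes t: "t \<ge> 1"
  shows "card (good t (branch t m d)) = dfact (2 * m - 1) *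
           (\<Prod>s = 1..t-1. dfact (2 * d s - 1) ^ (m * (\<Prod>j = s+1..t-1. d j)))"
proof -
  define B where "B = branch t m d"
  have B0: "B 0 = 2 * m" unfolding B_def branch_def by simp
  have Bk: "B k = d (t - k)" if "k \<ge> 1" for k unfolding B_def branch_def using that by simp
  have "card (good t B) = dfact (B 0 - 1) * (\<Prod>k\<in>{1..<t}. dfact (2 * B k - 1) ^ (card (layer k B) div 2))"
    by (rule card_good) (use B0 t in auto)
  also have "(\<Prod>k\<in>{1..<t}. dfact (2 * B k - 1) ^ (card (layer k B) div 2)) =
      (\<Prod>k\<in>{1..<t}. dfact (2 * d (t - k) - 1) ^ (m * (\<Prod>j\<in>{1..<k}. d (t - j))))"
  proof (rule prod.cong[OF refl])
    fix k assume k: "k \<in> {1..<t}"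
    have "{..<k} = insert 0 {1..<k}" using k by auto
    then have "(\<Prod>j<k. B j) = B 0 * (\<Prod>j\<in>{1..<k}. B j)" by simp
    also have "(\<Prod>j\<in>{1..<k}. B j) = (\<Prod>j\<in>{1..<k}. d (t - j))" by (rule prod.cong) (auto simp: Bk)
    finally have "card (layer k B) div 2 = m * (\<Prod>j\<in>{1..<k}. d (t - j))" unfolding card_layer B0 by simp
    then show "dfact (2 * B k - 1) ^ (card (layer k B) div 2) = dfact (2 * d (t - k) - 1) ^ (m * (\<Prod>j\<in>{1..<k}. d (t - j)))"
      using Bk k by simp
  qed
  also have "\<dots> = (\<Prod>s = 1..t-1. dfact (2 * d s - 1) ^ (m * (\<Prod>j = s+1..t-1. d j)))"
  proof (rule prod.reindex_bij_witness[where i="\<lambda>s. t - s" and j="\<lambda>k. t - k"])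
    fix k assume k: "k \<in> {1..<t}"
    show "t - (t - k) = k" using k by auto
    show "t - k \<in> {1..t-1}" using k by auto
    have "(\<Prod>j = t - k + 1..t-1. d j) = (\<Prod>j\<in>{1..<k}. d (t - j))"
      by (rule prod.reindex_bij_witness[where i="\<lambda>s. t - s" and j="\<lambda>k. t - k"]) (use k in auto)
    then show "dfact (2 * d (t - k) - 1) ^ (m * (\<Prod>j = t - k + 1..t-1. d j)) =
        dfact (2 * d (t - k) - 1) ^ (m * (\<Prod>j\<in>{1..<k}. d (t - j)))" by simp
  next
    fix s assume s: "s \<in> {1..t-1}"
    show "t - (t - s) = s" using s t by auto
    show "t - s \<in> {1..<t}" using s t by auto
  qed
  finally show ?thesis unfolding B_def B0[unfolded B_def] by simp
qed


lemma main_count: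
  fixes t m N r :: nat and d :: "nat \<Rightarrow> nat"
  assumes t1: "t \<ge> 1" and m1: "m \<ge> 1"
    and N: "N \<ge> card (tree_verts t m d)"
    and r: "r \<in> {1..N}"
  shows "num_classes t m d N r = card (good t (branch t m d))"
proof -
  define B where "B = branch t m d"
  define Z where "Z = zero_excess_labelings t m d N r"
  define V where "V = verts t B"
  have tvV: "tree_verts t m d = V" unfolding V_def B_def tv ..
  have Zc: "l \<in> Z \<longleftrightarrow> l \<in> V \<rightarrow>\<^sub>E {1..N} \<and> l [] = r \<and> zl t B l" for l
    unfolding Z_def Zchar labelings_def tvV B_def by auto
  have finZ: "finite Z"
    by (rule finite_subset[of _ "V \<rightarrow>\<^sub>E {1..N}"]) (use Zc in \<open>auto intro!: finite_PiE simp: V_def verts_finite\<close>)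
  have repZ: "rep t B l (pi_of t B l)" if "l \<in> Z" for l
    using zl.rep_P Zc that by blast
  have kern: "\<forall>v\<in>V. \<forall>w\<in>V. l v = l w \<longleftrightarrow> (v = w \<or> (v \<noteq> [] \<and> w = \<pi> v))" if "rep t B l \<pi>" for l \<pi>
    using that unfolding rep_def V_def by auto
  have iso: "lab_iso t m d N r l l' \<longleftrightarrow> pi_of t B l = pi_of t B l'" if l: "l \<in> Z" "l' \<in> Z" for l l'
  proof
    assume "lab_iso t m d N r l l'"
    then obtain \<sigma> where s: "bij_betw \<sigma> {1..N} {1..N}" "\<sigma> r = r" "\<forall>v\<in>V. l' v = \<sigma> (l v)"
      unfolding lab_iso_def tvV by blast
    have inj: "inj_on \<sigma> {1..N}" using s(1) bij_betw_def by blast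
    have lN: "l v \<in> {1..N}" if "v \<in> V" for v using Zc l(1) that by (auto simp: PiE_def Pi_def)
    have "rep t B l' (pi_of t B l)"
      unfolding rep_def
    proof (intro conjI ballI)
      show "pi_of t B l \<in> good t B" using repZ[OF l(1)] unfolding rep_def by auto
      fix v w assume v: "v \<in> verts t B" and w: "w \<in> verts t B"
      have "l' v = l' w \<longleftrightarrow> l v = l w" using s(3) inj lN v w unfolding V_def by (auto dest: inj_onD)
      then show "l' v = l' w \<longleftrightarrow> (v = w \<or> (v \<noteq> [] \<and> w = pi_of t B l v))"
        using kern[OF repZ[OF l(1)]] v w unfolding V_def by auto
    qed
    then show "pi_of t B l = pi_of t B l'" using repZ[OF l(2)] by (rule rep_unique)
  next
    assume e: "pi_of t B l = pi_of t B l'"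
    have k: "\<forall>v\<in>V. \<forall>w\<in>V. l v = l w \<longleftrightarrow> l' v = l' w"
      using kern[OF repZ[OF l(1)]] kern[OF repZ[OF l(2)]] e by auto
    have sub: "l ` V \<subseteq> {1..N}" "l' ` V \<subseteq> {1..N}" using Zc l by (auto simp: PiE_def Pi_def)
    obtain \<sigma> where s: "bij_betw \<sigma> {1..N} {1..N}" "\<forall>v\<in>V. \<sigma> (l v) = l' v"
      using exists_perm[OF _ sub k] by auto
    have "\<sigma> r = r" using s(2) nil_verts[of t B] Zc l unfolding V_def by auto
    then show "lab_iso t m d N r l l'" unfolding lab_iso_def tvV using s by auto
  qed
  have "num_classes t m d N r = card (Z // {(l, l'). l \<in> Z \<and> l' \<in> Z \<and> pi_of t B l = pi_of t B l'})"
  proof -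
    have "{(l, l'). l \<in> Z \<and> l' \<in> Z \<and> lab_iso t m d N r l l'} = {(l, l'). l \<in> Z \<and> l' \<in> Z \<and> pi_of t B l = pi_of t B l'}"
      using iso by auto
    then show ?thesis unfolding num_classes_def Z_def by simp
  qed
  also have "\<dots> = card (pi_of t B ` Z)" by (rule card_quotient_fun[OF finZ])
  also have "pi_of t B ` Z = good t B"
  proof
    show "pi_of t B ` Z \<subseteq> good t B" using repZ unfolding rep_def by auto
    show "good t B \<subseteq> pi_of t B ` Z"
    proof
      fix \<pi> assume g: "\<pi> \<in> good t B"
      define C where "C = (\<lambda>v. {v, \<pi> v}) ` (V - {[]})"
      have finV: "finite V" unfolding V_def by (rule verts_finite)
      have "card C \<le> card (V - {[]})" unfolding C_def by (rule card_image_le) (use finV in simp)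
      also have "\<dots> = card V - 1" using finV nil_verts[of t B] unfolding V_def by (simp add: card_Diff_singleton)
      also have "\<dots> \<le> N - 1" using N tvV by simp
      also have "\<dots> = card ({1..N} - {r})" using r by simp
      finally obtain f where f: "f ` C \<subseteq> {1..N} - {r}" "inj_on f C"
        using card_le_inj[of C "{1..N} - {r}"] finV unfolding C_def by auto
      define l where "l = restrict (\<lambda>v. if v = [] then r else f {v, \<pi> v}) V"
      have lv: "l v = (if v = [] then r else f {v, \<pi> v})" if "v \<in> V" for v using that l_def by simp
      have fC: "f {v, \<pi> v} \<in> {1..N} - {r}" if "v \<in> V" "v \<noteq> []" for v
      proof -
        have "{v, \<pi> v} \<in> C" unfolding C_def using that by auto
        then show ?thesis using f(1) by blast
      qed
      have rl: "rep t B l \<pi>"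
        unfolding rep_def
      proof (intro conjI ballI)
        show "\<pi> \<in> good t B" using g .
        fix v w assume v: "v \<in> verts t B" and w: "w \<in> verts t B"
        show "l v = l w \<longleftrightarrow> (v = w \<or> (v \<noteq> [] \<and> w = \<pi> v))"
        proof (cases "v = []"; cases "w = []")
          assume "v = []" "w = []" then show ?thesis by simp
        next
          assume vw: "v = []" "w \<noteq> []"
          then show ?thesis using lv fC[of w] v w unfolding V_def by auto
        next
          assume vw: "v \<noteq> []" "w = []"
          then show ?thesis using lv fC[of v] v w goodD(2)[OF g v] unfolding V_def by auto
        next
          assume vw: "v \<noteq> []" "w \<noteq> []"
          have "l v = l w \<longleftrightarrow> f {v, \<pi> v} = f {w, \<pi> w}" using lv v w vw unfolding V_def by simp
          also have "\<dots> \<longleftrightarrow> {v, \<pi> v} = {w, \<pi> w}"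
            using f(2) v w vw unfolding C_def V_def by (auto dest: inj_onD)
          also have "\<dots> \<longleftrightarrow> (w = v \<or> w = \<pi> v)"
            using goodD[OF g v vw(1)] goodD[OF g w vw(2)] by (auto simp: doubleton_eq_iff)
          finally show ?thesis using vw by auto
        qed
      qed
      have "l \<in> Z"
      proof -
        have "l \<in> V \<rightarrow>\<^sub>E {1..N}" unfolding l_def using fC r by auto
        moreover have "l [] = r" using lv nil_verts[of t B] unfolding V_def by simp
        moreover have "zl t B l" by (rule rep_zl[OF rl])
        ultimately show ?thesis using Zc by auto
      qed
      moreover have "pi_of t B l = \<pi>" using rep_unique[OF repZ[OF \<open>l \<in> Z\<close>] rl] .
      ultimately show "\<pi> \<in> pi_of t B ` Z" by force
    qed
  qed
  finally show ?thesis unfolding B_def .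
qed

theorem proposition2p15:
  fixes t m N r :: nat and d :: "nat \<Rightarrow> nat"
  assumes "t \<ge> 1" and "m \<ge> 1"
    and "\<forall>s \<in> {1..t-1}. d s \<ge> 1"
    and "N \<ge> card (tree_verts t m d)"
    and "r \<in> {1..N}"
  shows "num_classes t m d N r =
           dfact (2 * m - 1) *
           (\<Prod>s = 1..t-1. dfact (2 * d s - 1) ^ (m * (\<Prod>j = s+1..t-1. d j)))"
  using main_count[OF assms(1,2,4,5)] formula[OF assms(1)] by simp

end
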